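(* Let $n\ge1$, let $\boldsymbol{L}\in\mathbb{R}^{n\times n}$ be Hurwitz, and for $m=1,\dots,n$ let $\boldsymbol{R}_m\in\mathbb{R}^{n\times n}$ be symmetric; define $\boldsymbol{\Upsilon}:\mathbb{R}^n\to\mathbb{R}^n$ by $\Upsilon_m(\boldsymbol{a})=\boldsymbol{a}^T\boldsymbol{R}_m\boldsymbol{a}$, with $\boldsymbol{a}^T\boldsymbol{\Upsilon}(\boldsymbol{a})=0$ for all $\boldsymbol{a}$. Consider the input-output system $$\dot{\boldsymbol{a}}=\boldsymbol{L}\boldsymbol{a}+\boldsymbol{\Upsilon}(\boldsymbol{a})+\boldsymbol{f}(t),\qquad\boldsymbol{y}=\boldsymbol{a},\qquad\boldsymbol{a}(0)=\boldsymbol{a}_0.$$ Let $\delta>0$ and let $D\subseteq\mathbb{R}^n$ contain $\{\boldsymbol{a}:\|\boldsymbol{a}\|\le\delta\}$. Suppose there exist a symmetric matrix $\boldsymbol{P}_{\text{SOS}}\in\mathbb{R}^{n\times n}$, a scalar $\varepsilon>0$ and a matrix $\boldsymbol{Q}\succeq0$ such that, with $V_{\text{SOS}}(\boldsymbol{a}):=\boldsymbol{a}^T\boldsymbol{P}_{\text{SOS}}\boldsymbol{a}$, for all $\boldsymbol{a}\in D$: $$V_{\text{SOS}}(\boldsymbol{a})-\varepsilon\boldsymbol{a}^T\boldsymbol{a}\ge0,\qquad -\Big(\tfrac{\partial V_{\text{SOS}}}{\partial\boldsymbol{a}}(\boldsymbol{L}\boldsymbol{a}+\boldsymbol{\Upsilon}(\boldsymbol{a}))+(\delta^2-\boldsymbol{a}^T\boldsymbol{a})\,\boldsymbol{a}^T\boldsymbol{Q}\boldsymbol{a}+\varepsilon\boldsymbol{a}^T\boldsymbol{a}\Big)\ge0.$$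 Let $\lambda_{\min},\lambda_{\max}$ denote the extreme eigenvalues of $\boldsymbol{P}_{\text{SOS}}$ and $\|2\boldsymbol{P}_{\text{SOS}}\|$ the spectral norm of $2\boldsymbol{P}_{\text{SOS}}$. Then for each $\boldsymbol{a}_0$ with $\|\boldsymbol{a}_0\|\le\delta\sqrt{\lambda_{\min}/\lambda_{\max}}$ the system is small-signal finite-gain $\mathcal{L}_p$ stable for each $p\in[1,\infty]$. In particular, for each $\tau\ge0$ and each $\boldsymbol{f}\in\mathcal{L}_{pe}$ with $$\sup_{0\le t\le\tau}\|\boldsymbol{f}(t)\|\le\frac{\lambda_{\min}\,\varepsilon\,\delta}{\lambda_{\max}\,\|2\boldsymbol{P}_{\text{SOS}}\|},$$ the state satisfies $\|\boldsymbol{a}(t)\|\le\delta$ for all $t\in[0,\tau]$ and the output satisfies $\|\boldsymbol{y}_\tau\|_{\mathcal{L}_p}\le\gamma_{\text{SOS}}\|\boldsymbol{f}_\tau\|_{\mathcal{L}_p}+\beta_{\text{SOS}}$, where $$\gamma_{\text{SOS}}=\frac{\lambda_{\max}\|2\boldsymbol{P}_{\text{SOS}}\|}{\lambda_{\min}\,\varepsilon},\qquad\beta_{\text{SOS}}=\|\boldsymbol{a}_0\|\sqrt{\frac{\lambda_{\max}}{\lambda_{\min}}}\,\rho,\qquad\rho=\begin{cases}1,&p=\infty,\\ \left(\frac{2\lambda_{\max}}{\varepsilon p}\right)^{1/p},&p\in[1,\infty).\end{cases}$$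
   Context: $\|\cdot\|$ denotes the Euclidean norm on $\mathbb{R}^n$. For a signal $\boldsymbol{g}:[0,\infty)\to\mathbb{R}^n$ and $\tau\ge0$, the truncation is $\boldsymbol{g}_\tau(t)=\boldsymbol{g}(t)$ for $0\le t\le\tau$ and $\boldsymbol{g}_\tau(t)=\boldsymbol{0}$ for $t>\tau$. For $p\in[1,\infty)$, $\|\boldsymbol{g}\|_{\mathcal{L}_p}=(\int_0^\infty\|\boldsymbol{g}(t)\|^p\,dt)^{1/p}$, and $\|\boldsymbol{g}\|_{\mathcal{L}_\infty}=\sup_{t\ge0}\|\boldsymbol{g}(t)\|$. $\mathcal{L}_p$ is the set of piecewise continuous $\boldsymbol{g}:[0,\infty)\to\mathbb{R}^n$ with finite $\mathcal{L}_p$ norm, and $\mathcal{L}_{pe}=\{\boldsymbol{g}:\boldsymbol{g}_\tau\in\mathcal{L}_p\ \forall\tau\in[0,\infty)\}$. A matrix is Hurwitz if all its eigenvalues have negative real part. "Small-signal finite-gain $\mathcal{L}_p$ stable" means there exist constants $r>0$, $\gamma\ge0$, $\beta\ge0$ such that every input with $\sup_{0\le t\le\tau}\|\boldsymbol{f}(t)\|\le r$ yields $\|\boldsymbol{y}_\tau\|_{\mathcal{L}_p}\le\gamma\|\boldsymbol{f}_\tau\|_{\mathcal{L}_p}+\beta$; the explicit bounds are given in the claim. *)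

theory Defs
  imports "HOL-Analysis.Analysis"
begin

definition hurwitz :: "real^'n^'n \<Rightarrow> bool" where
  "hurwitz L \<longleftrightarrow> (\<forall>z::complex.
     det ((\<chi> i j. (if i = j then z else 0) - complex_of_real (L $ i $ j)) :: complex^'n^'n) = 0
       \<longrightarrow> Re z < 0)"

definition symmetric_mat :: "real^'n^'n \<Rightarrow> bool" where
  "symmetric_mat A \<longleftrightarrow> transpose A = A"

definition psd :: "real^'n^'n \<Rightarrow> bool" where
  "psd A \<longleftrightarrow> symmetric_mat A \<and> (\<forall>x. 0 \<le> x \<bullet> (A *v x))"

text \<open>Real eigenvalues of a real matrix (all eigenvalues, for a symmetric matrix).\<close>
definition eigvals :: "real^'n^'n \<Rightarrow> real set" where
  "eigvals A = {l. \<exists>v. v \<noteq> 0 \<and> A *v v = l *\<^sub>R v}"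

definition lambda_min :: "real^'n^'n \<Rightarrow> real" where
  "lambda_min A = Min (eigvals A)"

definition lambda_max :: "real^'n^'n \<Rightarrow> real" where
  "lambda_max A = Max (eigvals A)"

text \<open>Spectral norm = operator norm induced by the Euclidean norm.\<close>
definition spec_norm :: "real^'n^'n \<Rightarrow> real" where
  "spec_norm A = onorm (\<lambda>x. A *v x)"

definition Upsilon :: "('n \<Rightarrow> real^'n^'n) \<Rightarrow> real^'n \<Rightarrow> real^'n" where
  "Upsilon R a = (\<chi> m. a \<bullet> (R m *v a))"

definition trunc :: "real \<Rightarrow> (real \<Rightarrow> 'a::zero) \<Rightarrow> real \<Rightarrow> 'a" where
  "trunc \<tau> g t = (if t \<le> \<tau> then g t else 0)"

definition piecewise_cont :: "(real \<Rightarrow> 'a::real_normed_vector) \<Rightarrow> bool" where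
  "piecewise_cont g \<longleftrightarrow> (\<forall>T\<ge>0. \<exists>S. finite S \<and>
     (\<forall>t\<in>{0..T} - S. continuous (at t within {0..}) g) \<and>
     (\<forall>s\<in>S. (\<exists>r. (g \<longlongrightarrow> r) (at_right s)) \<and> (0 < s \<longrightarrow> (\<exists>l. (g \<longlongrightarrow> l) (at_left s)))))"

definition Lp_norm :: "ereal \<Rightarrow> (real \<Rightarrow> 'a::real_normed_vector) \<Rightarrow> real" where
  "Lp_norm p g = (if p = \<infinity> then Sup ((\<lambda>t. norm (g t)) ` {0..})
     else (LINT t:{0..}|lborel. norm (g t) powr real_of_ereal p) powr (1 / real_of_ereal p))"

definition in_Lp :: "ereal \<Rightarrow> (real \<Rightarrow> 'a::real_normed_vector) \<Rightarrow> bool" where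
  "in_Lp p g \<longleftrightarrow> piecewise_cont g \<and>
     (if p = \<infinity> then bdd_above ((\<lambda>t. norm (g t)) ` {0..})
      else set_integrable lborel {0..} (\<lambda>t. norm (g t) powr real_of_ereal p))"

definition in_Lpe :: "ereal \<Rightarrow> (real \<Rightarrow> 'a::real_normed_vector) \<Rightarrow> bool" where
  "in_Lpe p g \<longleftrightarrow> (\<forall>\<tau>\<ge>0. in_Lp p (trunc \<tau> g))"

definition rho :: "ereal \<Rightarrow> real \<Rightarrow> real \<Rightarrow> real" where
  "rho p lmax \<epsilon> = (if p = \<infinity> then 1
     else (2 * lmax / (\<epsilon> * real_of_ereal p)) powr (1 / real_of_ereal p))"

end

theory Submission
  imports Defs
begin

lemma sym_dot:
  assumes "symmetric_mat P"
  shows "x \<bullet> (P *v y) = (P *v x) \<bullet> y"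
proof -
  have "x \<bullet> (P *v y) = (x v* P) \<bullet> y" by (simp add: dot_lmul_matrix)
  also have "x v* P = P *v x"
    using assms unfolding symmetric_mat_def by (metis vector_transpose_matrix)
  finally show ?thesis .
qed

lemma neg_mv: "(- P) *v x = - (P *v (x::real^'n))"
  by (simp add: matrix_vector_mult_def vec_eq_iff sum_negf)

lemma quad_expand:
  assumes "symmetric_mat P"
  shows "(v + t *\<^sub>R w) \<bullet> (P *v (v + t *\<^sub>R w)) =
     v \<bullet> (P *v v) + 2 * t * (w \<bullet> (P *v v)) + t\<^sup>2 * (w \<bullet> (P *v w))"
proof -
  have "v \<bullet> (P *v w) = w \<bullet> (P *v v)" using sym_dot[OF assms] by (simp add: inner_commute)
  then show ?thesis
    by (simp add: matrix_vector_right_distrib matrix_vector_mult_scaleR inner_add_left inner_add_right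
        algebra_simps power2_eq_square)
qed

lemma quad_zero_lin:
  fixes b c :: real
  assumes "\<And>t. 2 * t * b + t\<^sup>2 * c \<le> 0"
  shows "b = 0"
proof (rule ccontr)
  assume "b \<noteq> 0"
  define d where "d = \<bar>c\<bar> + 1"
  have d: "d > 0" "2 * d + c > 0" unfolding d_def by auto
  have "2 * (b/d) * b + (b/d)\<^sup>2 * c = b\<^sup>2 * (2 * d + c) / d\<^sup>2"
    using d by (simp add: field_simps power2_eq_square)
  also have "\<dots> > 0" using d \<open>b \<noteq> 0\<close> by (simp add: divide_pos_pos)
  finally show False using assms[of "b/d"] by simp
qed

lemma sym_max_eig:
  fixes P :: "real^'n^'n"
  assumes "symmetric_mat P"
  shows "\<exists>l v. v \<noteq> 0 \<and> P *v v = l *\<^sub>R v \<and> (\<forall>x. x \<bullet> (P *v x) \<le> l * (x \<bullet> x))"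
proof -
  let ?q = "\<lambda>x::real^'n. x \<bullet> (P *v x)"
  have cq: "continuous_on (sphere 0 1) ?q"
    by (intro continuous_intros linear_continuous_on) auto
  obtain i :: 'n where True by auto
  have ne: "sphere (0::real^'n) 1 \<noteq> {}"
    using norm_axis_1[of i] by (metis mem_sphere_0 empty_iff)
  obtain v where v: "v \<in> sphere 0 1" and vmax: "\<And>y. y \<in> sphere 0 1 \<Longrightarrow> ?q y \<le> ?q v"
    using continuous_attains_sup[OF compact_sphere ne cq] by blast
  define l where "l = ?q v"
  have vv: "v \<bullet> v = 1" using v by (simp add: dot_square_norm)
  have all: "?q x \<le> l * (x \<bullet> x)" for x
  proof (cases "x = 0")
    case True then show ?thesis by simp
  next
    case False
    define u where "u = (1 / norm x) *\<^sub>R x"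
    have u: "u \<in> sphere 0 1" using False by (simp add: u_def)
    have xu: "x = norm x *\<^sub>R u" using False by (simp add: u_def)
    have "?q (norm x *\<^sub>R u) = (norm x)\<^sup>2 * ?q u"
      by (simp add: matrix_vector_mult_scaleR power2_eq_square)
    then have "?q x = (norm x)\<^sup>2 * ?q u" using xu by metis
    also have "\<dots> \<le> (norm x)\<^sup>2 * l" using vmax[OF u] by (simp add: l_def mult_left_mono)
    finally show ?thesis by (simp add: dot_square_norm mult.commute)
  qed
  define w where "w = P *v v - l *\<^sub>R v"
  have "2 * t * (w \<bullet> (P *v v) - l * (w \<bullet> v)) + t\<^sup>2 * (w \<bullet> (P *v w) - l * (w \<bullet> w)) \<le> 0" for t
  proof -
    have "?q (v + t *\<^sub>R w) \<le> l * ((v + t *\<^sub>R w) \<bullet> (v + t *\<^sub>R w))" by (rule all)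
    then show ?thesis
      unfolding quad_expand[OF assms]
      by (simp add: inner_add_left inner_add_right vv l_def algebra_simps power2_eq_square inner_commute)
  qed
  then have "w \<bullet> (P *v v) - l * (w \<bullet> v) = 0" by (rule quad_zero_lin)
  then have "w \<bullet> w = 0" by (simp add: w_def inner_diff_left inner_diff_right algebra_simps inner_commute)
  then have "P *v v = l *\<^sub>R v" by (simp add: w_def)
  moreover have "v \<noteq> 0" using v by auto
  ultimately show ?thesis using all by blast
qed

lemma eigvals_finite:
  fixes P :: "real^'n^'n"
  assumes sym: "symmetric_mat P"
  shows "finite (eigvals P)"
proof -
  define e where "e l = (SOME v. v \<noteq> 0 \<and> P *v v = l *\<^sub>R v)" for l
  have e: "e l \<noteq> 0 \<and> P *v e l = l *\<^sub>R e l" if "l \<in> eigvals P" for l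
    using that unfolding eigvals_def e_def by (smt (verit, ccfv_SIG) mem_Collect_eq someI_ex)
  have inj: "inj_on e (eigvals P)"
  proof (rule inj_onI)
    fix l m assume l: "l \<in> eigvals P" and m: "m \<in> eigvals P" and "e l = e m"
    then have "l *\<^sub>R e l = m *\<^sub>R e l" using e[OF l] e[OF m] by metis
    then show "l = m" using e[OF l] by auto
  qed
  have orth: "pairwise orthogonal (e ` eigvals P)"
  proof (clarsimp simp: pairwise_def)
    fix l m assume l: "l \<in> eigvals P" and m: "m \<in> eigvals P" and ne: "e l \<noteq> e m"
    then have lm: "l \<noteq> m" by auto
    have "l * (e l \<bullet> e m) = (P *v e l) \<bullet> e m" using e[OF l] by simp
    also have "\<dots> = e l \<bullet> (P *v e m)" using sym_dot[OF sym] by simp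
    also have "\<dots> = m * (e l \<bullet> e m)" using e[OF m] by simp
    finally have "(l - m) * (e l \<bullet> e m) = 0" by (simp add: algebra_simps)
    then show "orthogonal (e l) (e m)" using lm by (simp add: orthogonal_def)
  qed
  have "0 \<notin> e ` eigvals P" using e by auto
  then have "independent (e ` eigvals P)" using pairwise_orthogonal_independent orth by blast
  then have "finite (e ` eigvals P)" by (rule independent_imp_finite)
  then show ?thesis using finite_imageD inj by blast
qed

lemma eigvalsD: "m \<in> eigvals A \<Longrightarrow> \<exists>v. v \<noteq> 0 \<and> A *v v = m *\<^sub>R v"
  by (simp add: eigvals_def)

lemma sym_neg: "symmetric_mat P \<Longrightarrow> symmetric_mat (- P)"
  unfolding symmetric_mat_def by (simp add: transpose_def vec_eq_iff)

lemma lam_props: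
  fixes P :: "real^'n^'n"
  assumes sym: "symmetric_mat P"
  shows "lambda_min P \<in> eigvals P" "lambda_max P \<in> eigvals P"
    "\<And>x. lambda_min P * (x \<bullet> x) \<le> x \<bullet> (P *v x)"
    "\<And>x. x \<bullet> (P *v x) \<le> lambda_max P * (x \<bullet> x)"
    "lambda_min P \<le> lambda_max P"
proof -
  obtain lh vh where h: "vh \<noteq> 0" "P *v vh = lh *\<^sub>R vh" "\<And>x. x \<bullet> (P *v x) \<le> lh * (x \<bullet> x)"
    using sym_max_eig[OF sym] by blast
  obtain ll' vl where l': "vl \<noteq> 0" "(- P) *v vl = ll' *\<^sub>R vl" "\<And>x. x \<bullet> ((- P) *v x) \<le> ll' * (x \<bullet> x)"
    using sym_max_eig[OF sym_neg[OF sym]] by blast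
  define ll where "ll = - ll'"
  have l: "P *v vl = ll *\<^sub>R vl" "\<And>x. ll * (x \<bullet> x) \<le> x \<bullet> (P *v x)"
  proof -
    show "P *v vl = ll *\<^sub>R vl" using l'(2) by (simp add: neg_mv ll_def) (metis minus_equation_iff scaleR_minus_left)
    show "ll * (x \<bullet> x) \<le> x \<bullet> (P *v x)" for x using l'(3)[of x] by (simp add: neg_mv ll_def)
  qed
  have hin: "lh \<in> eigvals P" using h unfolding eigvals_def by auto
  have lin: "ll \<in> eigvals P" using l l' unfolding eigvals_def by auto
  have rng: "ll \<le> m \<and> m \<le> lh" if mE: "m \<in> eigvals P" for m
  proof -
    obtain v where v: "v \<noteq> 0" "P *v v = m *\<^sub>R v" using eigvalsD[OF mE] by blast
    have q: "v \<bullet> (P *v v) = m * (v \<bullet> v)" using v by simp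
    have pos: "v \<bullet> v > 0" using v by simp
    show ?thesis using l(2)[of v] h(3)[of v] q pos
      by (metis mult_le_cancel_right_pos)
  qed
  have fin: "finite (eigvals P)" by (rule eigvals_finite[OF sym])
  have mn: "lambda_min P = ll" unfolding lambda_min_def
    by (rule Min_eqI[OF fin]) (use rng lin in auto)
  have mx: "lambda_max P = lh" unfolding lambda_max_def
    by (rule Max_eqI[OF fin]) (use rng hin in auto)
  show "lambda_min P \<in> eigvals P" "lambda_max P \<in> eigvals P" using mn mx lin hin by auto
  show "\<And>x. lambda_min P * (x \<bullet> x) \<le> x \<bullet> (P *v x)" using mn l by auto
  show "\<And>x. x \<bullet> (P *v x) \<le> lambda_max P * (x \<bullet> x)" using mx h by auto
  show "lambda_min P \<le> lambda_max P" using mn mx rng lin by auto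
qed

lemma mono_deriv:
  fixes \<phi> D :: "real \<Rightarrow> real"
  assumes cont: "continuous_on {x..y} \<phi>" and S: "finite S" and xy: "x \<le> y"
    and der: "\<And>u. u \<in> {x<..<y} - S \<Longrightarrow> (\<phi> has_real_derivative D u) (at u)"
    and neg: "\<And>u. u \<in> {x..y} \<Longrightarrow> D u \<le> 0"
  shows "\<phi> y \<le> \<phi> x"
proof -
  have "(D has_integral (\<phi> y - \<phi> x)) {x..y}"
    by (rule fundamental_theorem_of_calculus_interior_strong[OF S xy _ cont])
       (use der in \<open>auto simp: has_real_derivative_iff_has_vector_derivative\<close>)
  moreover have "((\<lambda>_. 0::real) has_integral 0) {x..y}" by simp
  ultimately have "\<phi> y - \<phi> x \<le> 0" using has_integral_le neg by metis
  then show ?thesis by simp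
qed

lemma barrier:
  fixes \<phi> D :: "real \<Rightarrow> real"
  assumes cont: "continuous_on {0..T} \<phi>" and S: "finite S"
    and der: "\<And>u. u \<in> {0<..<T} - S \<Longrightarrow> (\<phi> has_real_derivative D u) (at u)"
    and init: "\<phi> 0 \<le> M"
    and loc: "\<And>s. s \<in> {0..<T} \<Longrightarrow> (\<forall>u\<in>{0..s}. \<phi> u \<le> M) \<Longrightarrow>
       \<exists>h>0. \<forall>u\<in>{s..s+h}. u \<le> T \<longrightarrow> M \<le> \<phi> u \<longrightarrow> D u \<le> 0"
  shows "\<forall>t\<in>{0..T}. \<phi> t \<le> M"
proof (rule ccontr)
  assume "\<not> ?thesis"
  then obtain t0 where t0: "t0 \<in> {0..T}" "\<phi> t0 > M" by force
  define E where "E = {u \<in> {0..T}. \<phi> u > M}"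
  define s where "s = Inf E"
  have Ene: "E \<noteq> {}" and Ebdd: "bdd_below E" using t0 by (auto simp: E_def bdd_below_def)
  have s0: "0 \<le> s" unfolding s_def by (rule cInf_greatest[OF Ene]) (auto simp: E_def)
  have st0: "s \<le> t0" unfolding s_def by (rule cInf_lower) (use t0 Ebdd in \<open>auto simp: E_def\<close>)
  have below: "\<phi> u \<le> M" if "u \<in> {0..<s}" for u
  proof (rule ccontr)
    assume "\<not> \<phi> u \<le> M"
    then have "u \<in> E" using that st0 t0 by (auto simp: E_def)
    then have "s \<le> u" unfolding s_def using Ebdd by (simp add: cInf_lower)
    then show False using that by auto
  qed
  have Acl: "closed {u \<in> {0..T}. \<phi> u \<le> M}"
    by (rule continuous_on_closed_Collect_le[OF cont]) auto
  have upto: "\<forall>u\<in>{0..s}. \<phi> u \<le> M"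
  proof (cases "s = 0")
    case True then show ?thesis using init s0 by auto
  next
    case False
    then have "0 < s" using s0 by auto
    have "{0..<s} \<subseteq> {u \<in> {0..T}. \<phi> u \<le> M}" using below st0 t0 by auto
    then have "closure {0..<s} \<subseteq> {u \<in> {0..T}. \<phi> u \<le> M}"
      using Acl by (rule closure_minimal)
    then show ?thesis using \<open>0 < s\<close> by auto
  qed
  have phis: "\<phi> s \<le> M" using upto s0 by auto
  then have "s \<noteq> t0" using t0 by auto
  then have sT: "s \<in> {0..<T}" using s0 st0 t0 by auto
  obtain h where h: "h > 0" and hD: "\<And>u. u \<in> {s..s+h} \<Longrightarrow> u \<le> T \<Longrightarrow> M \<le> \<phi> u \<Longrightarrow> D u \<le> 0"
    using loc[OF sT upto] by blast
  have "Inf E < s + h" using h by (simp add: s_def)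
  then obtain t1 where t1E: "t1 \<in> E" and t1h: "t1 < s + h" using cInf_less_iff[OF Ene Ebdd] by auto
  have st1: "s \<le> t1" unfolding s_def using cInf_lower[OF t1E Ebdd] .
  have t1: "t1 \<in> {0..T}" "\<phi> t1 > M" using t1E by (auto simp: E_def)
  define C where "C = {u \<in> {s..t1}. \<phi> u \<le> M}"
  have contC: "continuous_on {s..t1} \<phi>" by (rule continuous_on_subset[OF cont]) (use s0 t1 in auto)
  have Ccl: "closed C" unfolding C_def by (rule continuous_on_closed_Collect_le[OF contC]) auto
  have sC: "s \<in> C" using upto st1 s0 by (auto simp: C_def)
  define s' where "s' = Sup C"
  have s'C: "s' \<in> C" unfolding s'_def
    by (rule closed_contains_Sup) (use sC Ccl in \<open>auto simp: C_def bdd_above_def\<close>)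
  have s'ub: "u \<le> s'" if "u \<in> C" for u
    unfolding s'_def by (rule cSup_upper[OF that]) (auto simp: C_def bdd_above_def)
  have s't1: "s' < t1"
  proof -
    have "s' \<le> t1" using s'C by (auto simp: C_def)
    moreover have "s' \<noteq> t1" using s'C t1 by (auto simp: C_def)
    ultimately show ?thesis by simp
  qed
  have contC': "continuous_on {s'..t1} \<phi>" by (rule continuous_on_subset[OF contC]) (use s'C in \<open>auto simp: C_def\<close>)
  obtain x where x: "s' \<le> x" "x \<le> t1" "\<phi> x = M"
    using IVT'[of \<phi> s' M t1, OF _ _ _ contC'] s'C t1 s't1 by (auto simp: C_def)
  have "x \<in> C" using x s'C by (auto simp: C_def)
  then have "x = s'" using s'ub x by force
  then have phis': "\<phi> s' = M" using x by simp
  have geM: "M \<le> \<phi> u" if "u \<in> {s'..t1}" for u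
  proof (cases "u = s'")
    case True then show ?thesis using phis' by simp
  next
    case False
    then have "u > s'" using that by auto
    then have "u \<notin> C" using s'ub by force
    then show ?thesis using that s'C by (auto simp: C_def)
  qed
  have "\<phi> t1 \<le> \<phi> s'"
  proof (rule mono_deriv[OF contC' S])
    show "s' \<le> t1" using s't1 by simp
    show "(\<phi> has_real_derivative D u) (at u)" if "u \<in> {s'<..<t1} - S" for u
      using der that s'C t1 s0 by (auto simp: C_def)
    show "D u \<le> 0" if "u \<in> {s'..t1}" for u
      using hD[of u] geM[OF that] that s'C t1h t1 by (auto simp: C_def)
  qed
  then show False using phis' t1 by simp
qed

lemma young_p:
  fixes x y \<theta> p :: real
  assumes x: "x > 0" and y: "y \<ge> 0" and th: "\<theta> > 0" and p: "p \<ge> 1"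
  shows "p * x powr (p-1) * y \<le> (p-1) * \<theta> * x powr p + \<theta> powr (1-p) * y powr p"
proof (cases "p = 1 \<or> y = 0")
  case True
  then show ?thesis
  proof
    assume "p = 1" then show ?thesis using y x th by simp
  next
    assume "y = 0" then show ?thesis using p th x by simp
  qed
next
  case False
  then have p1: "p > 1" and y0: "y > 0" using p y by auto
  define a where "a = \<theta> * x powr p"
  define b where "b = \<theta> powr (1-p) * y powr p"
  have a0: "a > 0" and b0: "b > 0" using th x y0 by (auto simp: a_def b_def)
  have "a powr ((p-1)/p) * b powr (1/p) \<le> ((p-1)/p) * a + (1/p) * b"
    by (rule Youngs_inequality_0) (use p1 a0 b0 in \<open>auto simp: field_simps\<close>)
  moreover have "a powr ((p-1)/p) * b powr (1/p) = x powr (p-1) * y"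
  proof -
    have "a powr ((p-1)/p) = \<theta> powr ((p-1)/p) * x powr (p-1)"
      using th x p1 by (simp add: a_def powr_mult powr_powr)
    moreover have "b powr (1/p) = \<theta> powr ((1-p)/p) * y"
      using th y0 p1 by (simp add: b_def powr_mult powr_powr)
    moreover have "\<theta> powr ((p-1)/p) * \<theta> powr ((1-p)/p) = 1"
    proof -
      have "(1 - p) / p + (p - 1) / p = 0" by (simp add: add_divide_distrib[symmetric])
      then show ?thesis using th by (simp add: powr_add[symmetric] add.commute)
    qed
    ultimately show ?thesis by (simp add: algebra_simps)
  qed
  ultimately have "x powr (p-1) * y \<le> ((p-1)/p) * a + (1/p) * b" by simp
  then have "p * (x powr (p-1) * y) \<le> p * (((p-1)/p) * a + (1/p) * b)"
    using p1 by (simp add: mult_left_mono)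
  also have "\<dots> = (p-1) * a + b" using p1 by (simp add: field_simps)
  finally show ?thesis by (simp add: a_def b_def mult.assoc)
qed

lemma final_alg:
  fixes A B p :: real
  assumes A: "A > 0" and B: "B \<ge> 0" and p: "p \<ge> 1"
  shows "p * B powr p + A powr p * (A/(A+B)) powr (1-p) \<le> (p - (p-1)*(A/(A+B))) * (A+B) powr p"
proof -
  have AB: "A + B > 0" using A B by simp
  have e1: "A powr p * (A/(A+B)) powr (1-p) = A * (A+B) powr (p-1)"
  proof -
    have "A powr p * (A/(A+B)) powr (1-p) = A powr p * A powr (1-p) / (A+B) powr (1-p)"
      using A AB by (simp add: powr_divide)
    also have "A powr p * A powr (1-p) = A" using A by (simp add: powr_add[symmetric])
    also have "A / (A+B) powr (1-p) = A * (A+B) powr (p-1)"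
      using AB by (simp add: powr_minus_divide[symmetric] powr_minus divide_inverse)
        (metis minus_diff_eq powr_minus)
    finally show ?thesis .
  qed
  have e2: "(p - (p-1)*(A/(A+B))) * (A+B) powr p = (p*B + A) * (A+B) powr (p-1)"
  proof -
    have "(A+B) powr p = (A+B) powr (1 + (p-1))" by simp
    also have "\<dots> = (A+B) * (A+B) powr (p-1)" using AB by (simp only: powr_add powr_one_gt_zero_iff) simp
    then show ?thesis using AB by (simp add: field_simps)
  qed
  have e3: "B powr p \<le> B * (A+B) powr (p-1)"
  proof (cases "B = 0")
    case True then show ?thesis by simp
  next
    case False
    have "B powr p = B powr (1 + (p-1))" by simp
    also have "\<dots> = B * B powr (p-1)" using B False by (simp only: powr_add) simp
    also have "\<dots> \<le> B * (A+B) powr (p-1)"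
      using B A p by (intro mult_left_mono powr_mono2) auto
    finally show ?thesis .
  qed
  show ?thesis unfolding e1 e2 using e3 p by (simp add: algebra_simps mult_left_mono)
qed

lemma spec_bound:
  fixes P :: "real^'n^'n"
  shows "(2 *\<^sub>R (P *v a)) \<bullet> v \<le> spec_norm (2 *\<^sub>R P) * norm a * norm v"
proof -
  have "(2 *\<^sub>R (P *v a)) \<bullet> v \<le> norm ((2 *\<^sub>R P) *v a) * norm v"
    by (metis norm_cauchy_schwarz scaleR_matrix_vector_assoc)
  also have "norm ((2 *\<^sub>R P) *v a) \<le> spec_norm (2 *\<^sub>R P) * norm a"
    unfolding spec_norm_def by (rule onorm) simp
  finally show ?thesis by (simp add: mult_right_mono)
qed

lemma V_deriv:
  fixes P :: "real^'n^'n" and a :: "real \<Rightarrow> real^'n"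
  assumes sym: "symmetric_mat P" and d: "(a has_vector_derivative a') (at t)"
  shows "((\<lambda>t. a t \<bullet> (P *v a t)) has_real_derivative ((2 *\<^sub>R (P *v a t)) \<bullet> a')) (at t)"
proof -
  have d2: "((\<lambda>t. P *v a t) has_vector_derivative (P *v a')) (at t)"
    by (rule bounded_linear.has_vector_derivative[OF matrix_vector_mul_bounded_linear d])
  have "((\<lambda>t. a t \<bullet> (P *v a t)) has_vector_derivative (a t \<bullet> (P *v a') + a' \<bullet> (P *v a t))) (at t)"
    by (rule bounded_bilinear.has_vector_derivative[OF bounded_bilinear_inner d d2])
  moreover have "a t \<bullet> (P *v a') + a' \<bullet> (P *v a t) = (2 *\<^sub>R (P *v a t)) \<bullet> a'"
    using sym_dot[OF sym, of "a t" a'] by (simp add: inner_commute)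
  ultimately show ?thesis by (simp add: has_real_derivative_iff_has_vector_derivative)
qed

lemma Ups_cont: "continuous_on UNIV (Upsilon R)"
  unfolding Upsilon_def
  by (intro continuous_intros linear_continuous_on) (auto intro: bounded_linear_inner_left)

lemma P_scalar:
  fixes P :: "real^'n^'n"
  assumes sym: "symmetric_mat P" and q: "\<And>x. x \<bullet> (P *v x) = l * (x \<bullet> x)"
  shows "P *v v = l *\<^sub>R v"
proof -
  define w where "w = P *v v - l *\<^sub>R v"
  have "2 * t * (w \<bullet> (P *v v) - l * (w \<bullet> v)) + t\<^sup>2 * (w \<bullet> (P *v w) - l * (w \<bullet> w)) \<le> 0" for t
  proof -
    have "(v + t *\<^sub>R w) \<bullet> (P *v (v + t *\<^sub>R w)) = l * ((v + t *\<^sub>R w) \<bullet> (v + t *\<^sub>R w))" by (rule q)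
    then show ?thesis
      unfolding quad_expand[OF sym] q[of v]
      by (simp add: inner_add_left inner_add_right algebra_simps power2_eq_square inner_commute)
  qed
  then have "w \<bullet> (P *v v) - l * (w \<bullet> v) = 0" by (rule quad_zero_lin)
  then have "w \<bullet> w = 0" by (simp add: w_def inner_diff_left inner_diff_right algebra_simps inner_commute)
  then show "P *v v = l *\<^sub>R v" by (simp add: w_def)
qed

lemma pw_bound:
  fixes x \<eta> v n g Dv xb p \<theta> lmin lmax \<epsilon> c k c' :: real
  assumes x: "x > 0" and eta: "\<eta> > 0" and xv: "x\<^sup>2 = v + \<eta>"
    and lo: "lmin * n\<^sup>2 \<le> v" and hi: "v \<le> lmax * n\<^sup>2" and n: "n \<ge> 0" and g: "g \<ge> 0"
    and Dv: "Dv \<le> - \<epsilon> * n\<^sup>2 + c * n * g" and xb: "x \<le> xb" and p: "p \<ge> 1" and th: "\<theta> > 0"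
    and lmin: "lmin > 0" and lmax: "lmax > 0" and eps: "\<epsilon> > 0" and c: "c \<ge> 0"
    and k: "k = \<epsilon> / (2 * lmax)" and c': "c' = c / (2 * sqrt lmin)"
  shows "(p/2) * x powr (p-2) * Dv \<le> - (p*k - c'*(p-1)*\<theta>) * x powr p
           + c' * \<theta> powr (1-p) * g powr p + p * k * sqrt \<eta> * xb powr (p-1)"
proof -
  have k0: "k > 0" using k eps lmax by simp
  have c'0: "c' \<ge> 0" using c' c lmin by simp
  have t1: "- \<epsilon> * n\<^sup>2 \<le> - 2 * k * v"
  proof -
    have "v / lmax \<le> n\<^sup>2" using hi lmax by (simp add: field_simps)
    then have "\<epsilon> * (v / lmax) \<le> \<epsilon> * n\<^sup>2" using eps by (intro mult_left_mono) auto
    moreover have "2 * k * v = \<epsilon> * (v / lmax)" using k lmax by (simp add: field_simps)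
    ultimately show ?thesis by linarith
  qed
  have nx: "n \<le> x / sqrt lmin"
  proof -
    have "lmin * n\<^sup>2 \<le> x\<^sup>2" using lo xv eta by simp
    then have "n\<^sup>2 \<le> x\<^sup>2 / lmin" using lmin by (simp add: field_simps)
    then have "sqrt (n\<^sup>2) \<le> sqrt (x\<^sup>2 / lmin)" by (rule real_sqrt_le_mono)
    then show ?thesis using n x lmin by (simp add: real_sqrt_divide)
  qed
  have t2: "c * n * g \<le> 2 * c' * g * x"
  proof -
    have "c * n * g \<le> c * (x / sqrt lmin) * g" using nx c g by (intro mult_right_mono mult_left_mono) auto
    moreover have "c * (x / sqrt lmin) * g = 2 * c' * g * x" using c' lmin by (simp add: field_simps)
    ultimately show ?thesis by linarith
  qed
  have D1: "Dv \<le> - 2 * k * x\<^sup>2 + 2 * k * \<eta> + 2 * c' * g * x"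
    using Dv t1 t2 xv by (simp add: algebra_simps)
  have xp2: "x powr (p-2) \<ge> 0" by simp
  have "(p/2) * x powr (p-2) * Dv \<le> (p/2) * x powr (p-2) * (- 2 * k * x\<^sup>2 + 2 * k * \<eta> + 2 * c' * g * x)"
    using D1 xp2 p by (intro mult_left_mono) auto
  also have "\<dots> = - p * k * (x powr (p-2) * x\<^sup>2) + p * k * (\<eta> * x powr (p-2)) + c' * (p * (x powr (p-2) * x) * g)"
    by (simp add: algebra_simps)
  also have "\<dots> = - p * k * x powr p + p * k * (\<eta> * x powr (p-2)) + c' * (p * x powr (p-1) * g)"
  proof -
    have "x powr 2 = x\<^sup>2" using x by simp
    moreover have "x powr (p-2) * x powr 2 = x powr p" by (simp only: powr_add[symmetric]) simp
    ultimately have h1: "x powr (p-2) * x\<^sup>2 = x powr p" by simp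
    have "x powr (p-2) * x powr 1 = x powr (p-1)" by (simp only: powr_add[symmetric]) simp
    then have h2: "x powr (p-2) * x = x powr (p-1)" using x by simp
    show ?thesis unfolding h1 h2 ..
  qed
  finally have step: "(p/2) * x powr (p-2) * Dv \<le> - p * k * x powr p + p * k * (\<eta> * x powr (p-2)) + c' * (p * x powr (p-1) * g)" .
  have e1: "\<eta> * x powr (p-2) \<le> sqrt \<eta> * xb powr (p-1)"
  proof -
    have "x powr (p-2) = x powr (p-1) / x"
    proof -
      have "x powr (p-2) * x powr 1 = x powr (p-1)" by (simp only: powr_add[symmetric]) simp
      then show ?thesis using x by (simp add: field_simps)
    qed
    moreover have "\<eta> / x \<le> sqrt \<eta>"
    proof -
      have v0: "v \<ge> 0" using lo lmin by (meson order_trans zero_le_mult_iff zero_le_power2 less_imp_le)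
      have "sqrt \<eta> \<le> x" using xv v0 x by (intro real_le_lsqrt) auto
      then have "sqrt \<eta> * sqrt \<eta> \<le> sqrt \<eta> * x" using eta by (intro mult_left_mono) auto
      then have "\<eta> \<le> sqrt \<eta> * x" using eta by simp
      then show ?thesis using x by (simp add: field_simps)
    qed
    ultimately have "\<eta> * x powr (p-2) \<le> sqrt \<eta> * x powr (p-1)"
    proof -
      have "\<eta> * x powr (p-2) = (\<eta> / x) * x powr (p-1)" using x \<open>x powr (p-2) = x powr (p-1) / x\<close> by simp
      also have "\<dots> \<le> sqrt \<eta> * x powr (p-1)" using \<open>\<eta> / x \<le> sqrt \<eta>\<close> by (intro mult_right_mono) auto
      finally show ?thesis .
    qed
    also have "\<dots> \<le> sqrt \<eta> * xb powr (p-1)"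
      using x xb p eta by (intro mult_left_mono powr_mono2) auto
    finally show ?thesis .
  qed
  have e2: "p * x powr (p-1) * g \<le> (p-1) * \<theta> * x powr p + \<theta> powr (1-p) * g powr p"
    by (rule young_p[OF x g th p])
  have "- p * k * x powr p + p * k * (\<eta> * x powr (p-2)) + c' * (p * x powr (p-1) * g)
      \<le> - p * k * x powr p + p * k * (sqrt \<eta> * xb powr (p-1)) + c' * ((p-1) * \<theta> * x powr p + \<theta> powr (1-p) * g powr p)"
    using e1 e2 k0 p c'0 by (intro add_mono mult_left_mono order_refl) auto
  with step show ?thesis by (simp add: algebra_simps)
qed

lemma sqrt_powr: "(w::real) \<ge> 0 \<Longrightarrow> sqrt w powr q = w powr (q/2)"
  by (simp add: powr_half_sqrt[symmetric] powr_powr)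

lemma norm_powr_sq: "(n::real) \<ge> 0 \<Longrightarrow> n powr p = (n\<^sup>2) powr (p/2)"
proof -
  assume n: "n \<ge> 0"
  have "n = sqrt (n\<^sup>2)" using n by simp
  then show ?thesis by (metis sqrt_powr zero_le_power2)
qed

locale traj =
  fixes L P Q :: "real^'n^'n" and R :: "'n \<Rightarrow> real^'n^'n" and D :: "(real^'n) set"
    and \<delta> \<epsilon> :: real and a0 :: "real^'n" and \<tau> :: real and f a :: "real \<Rightarrow> real^'n"
  assumes energy: "\<And>x. x \<bullet> Upsilon R x = 0"
    and \<delta>_pos: "\<delta> > 0"
    and D_ball: "cball 0 \<delta> \<subseteq> D"
    and P_sym: "symmetric_mat P"
    and \<epsilon>_pos: "\<epsilon> > 0"
    and Q_psd: "psd Q"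
    and V_pos: "\<And>x. x \<in> D \<Longrightarrow> x \<bullet> (P *v x) - \<epsilon> * (x \<bullet> x) \<ge> 0"
    and V_dec: "\<And>x. x \<in> D \<Longrightarrow>
        - ((2 *\<^sub>R (P *v x)) \<bullet> (L *v x + Upsilon R x)
           + (\<delta>\<^sup>2 - x \<bullet> x) * (x \<bullet> (Q *v x)) + \<epsilon> * (x \<bullet> x)) \<ge> 0"
    and a0: "norm a0 \<le> \<delta> * sqrt (lambda_min P / lambda_max P)"
    and \<tau>: "\<tau> \<ge> 0"
    and pc: "piecewise_cont (trunc \<tau> f)"
    and fb: "\<forall>t\<in>{0..\<tau>}. norm (f t) \<le> lambda_min P * \<epsilon> * \<delta> / (lambda_max P * spec_norm (2 *\<^sub>R P))"
    and acont: "continuous_on {0..\<tau>} a" and aini: "a 0 = a0"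
    and integ: "\<forall>t\<in>{0..\<tau>}. ((\<lambda>s. L *v a s + Upsilon R (a s) + f s) has_integral (a t - a0)) {0..t}"
begin

abbreviation "lmin \<equiv> lambda_min P"
abbreviation "lmax \<equiv> lambda_max P"
abbreviation "cc \<equiv> spec_norm (2 *\<^sub>R P)"
abbreviation "Fb \<equiv> lambda_min P * \<epsilon> * \<delta> / (lambda_max P * spec_norm (2 *\<^sub>R P))"
abbreviation "V x \<equiv> x \<bullet> (P *v x)"
abbreviation "dyn x \<equiv> (2 *\<^sub>R (P *v x)) \<bullet> (L *v x + Upsilon R x)"
abbreviation "FF t \<equiv> L *v a t + Upsilon R (a t) + f t"
abbreviation "DD t \<equiv> (2 *\<^sub>R (P *v a t)) \<bullet> FF t"

lemma Vlo: "lmin * (norm x)\<^sup>2 \<le> V x"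
  using lam_props(3)[OF P_sym, of x] by (simp add: power2_norm_eq_inner)

lemma Vhi: "V x \<le> lmax * (norm x)\<^sup>2"
  using lam_props(4)[OF P_sym, of x] by (simp add: power2_norm_eq_inner)

lemma lmin_ge: "\<epsilon> \<le> lmin"
proof -
  obtain v where v: "v \<noteq> 0" "P *v v = lmin *\<^sub>R v"
    using eigvalsD[OF lam_props(1)[OF P_sym]] by blast
  define x where "x = (\<delta> / norm v) *\<^sub>R v"
  have nx: "norm x = \<delta>" using v \<delta>_pos by (simp add: x_def)
  then have "x \<in> D" using D_ball by auto
  then have "x \<bullet> (P *v x) - \<epsilon> * (x \<bullet> x) \<ge> 0" by (rule V_pos)
  moreover have "P *v x = lmin *\<^sub>R x" using v by (simp add: x_def matrix_vector_mult_scaleR)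
  ultimately have "(lmin - \<epsilon>) * (x \<bullet> x) \<ge> 0" by (simp add: algebra_simps)
  moreover have "x \<bullet> x > 0" using nx \<delta>_pos by (metis inner_gt_zero_iff norm_zero less_irrefl)
  ultimately show ?thesis by (simp add: zero_le_mult_iff)
qed

lemma lmin_pos: "lmin > 0" using lmin_ge \<epsilon>_pos by simp
lemma lmax_ge: "lmin \<le> lmax" by (rule lam_props(5)[OF P_sym])
lemma lmax_pos: "lmax > 0" using lmin_pos lmax_ge by simp

lemma cc_pos: "cc > 0"
proof -
  obtain v where v: "v \<noteq> 0" "P *v v = lmin *\<^sub>R v"
    using eigvalsD[OF lam_props(1)[OF P_sym]] by blast
  have "(2 *\<^sub>R (P *v v)) \<bullet> v \<le> cc * norm v * norm v" by (rule spec_bound)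
  moreover have "(2 *\<^sub>R (P *v v)) \<bullet> v = 2 * lmin * (norm v)\<^sup>2"
    using v by (simp add: power2_norm_eq_inner)
  moreover have "(norm v)\<^sup>2 > 0" using v by simp
  ultimately have "2 * lmin * (norm v)\<^sup>2 \<le> cc * (norm v)\<^sup>2" by (simp add: power2_eq_square mult.assoc)
  then have "2 * lmin \<le> cc" using \<open>(norm v)\<^sup>2 > 0\<close> by simp
  then show ?thesis using lmin_pos by simp
qed

lemma dyn_ball: "norm x \<le> \<delta> \<Longrightarrow> dyn x \<le> - \<epsilon> * (norm x)\<^sup>2"
proof -
  assume nx: "norm x \<le> \<delta>"
  then have "x \<in> D" using D_ball by auto
  note h = V_dec[OF this]
  have "x \<bullet> (Q *v x) \<ge> 0" using Q_psd by (simp add: psd_def)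
  moreover have "\<delta>\<^sup>2 - x \<bullet> x \<ge> 0" using nx \<delta>_pos
    by (simp add: power2_norm_eq_inner[symmetric] power_mono)
  ultimately have "(\<delta>\<^sup>2 - x \<bullet> x) * (x \<bullet> (Q *v x)) \<ge> 0" by simp
  then show ?thesis using h by (simp add: power2_norm_eq_inner)
qed

lemma Fb_eq: "cc * Fb = lmin * \<epsilon> * \<delta> / lmax"
  using cc_pos lmax_pos by (simp add: field_simps)

lemma deriv_a: "\<exists>S. finite S \<and> (\<forall>t\<in>{0<..<\<tau>} - S. (a has_vector_derivative FF t) (at t))"
proof -
  obtain S where S: "finite S" "\<forall>t\<in>{0..\<tau>} - S. continuous (at t within {0..}) (trunc \<tau> f)"
    using pc \<tau> unfolding piecewise_cont_def by blast
  define F' where "F' t = L *v a t + Upsilon R (a t) + trunc \<tau> f t" for t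
  have eqF: "F' t = FF t" if "t \<in> {0..\<tau>}" for t using that by (simp add: F'_def trunc_def)
  have intF: "(\<lambda>t. FF t) integrable_on {0..\<tau>}" using integ \<tau> by auto
  have intF': "F' integrable_on {0..\<tau>}"
    by (rule integrable_eq[OF intF]) (simp add: eqF)
  have aint: "a u = a0 + integral {0..u} F'" if "u \<in> {0..\<tau>}" for u
  proof -
    have "integral {0..u} F' = integral {0..u} (\<lambda>t. FF t)"
      by (rule integral_cong) (use that in \<open>auto simp: eqF\<close>)
    also have "\<dots> = a u - a0" using integ that by (auto intro: integral_unique)
    finally show ?thesis by simp
  qed
  have ca1: "continuous_on {0..\<tau>} (\<lambda>t. L *v a t)"
    by (rule linear_continuous_on_compose[OF acont]) simp
  have ca2: "continuous_on {0..\<tau>} (\<lambda>t. Upsilon R (a t))"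
    by (rule continuous_on_compose2[OF Ups_cont acont]) auto
  have "(a has_vector_derivative FF t) (at t)" if t: "t \<in> {0<..<\<tau>} - S" for t
  proof -
    have t': "t \<in> {0..\<tau>} - S" using t by auto
    have c1: "continuous (at t within ({0..\<tau>} - S)) (\<lambda>t. L *v a t)"
      using ca1 t' by (meson Diff_subset continuous_on_eq_continuous_within continuous_within_subset DiffD1)
    have c2: "continuous (at t within ({0..\<tau>} - S)) (\<lambda>t. Upsilon R (a t))"
      using ca2 t' by (meson Diff_subset continuous_on_eq_continuous_within continuous_within_subset DiffD1)
    have c3: "continuous (at t within ({0..\<tau>} - S)) (trunc \<tau> f)"
    proof -
      have "continuous (at t within {0..}) (trunc \<tau> f)" using S(2) t' by blast
      then show ?thesis by (rule continuous_within_subset) auto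
    qed
    have cF: "continuous (at t within ({0..\<tau>} - S)) F'"
      unfolding F'_def by (intro continuous_add c1 c2 c3)
    have d1: "((\<lambda>u. integral {0..u} F') has_vector_derivative F' t) (at t within ({0..\<tau>} - S))"
      by (rule integral_has_vector_derivative_continuous_at[OF intF' t' S(1) cF])
    have d2: "((\<lambda>u. a0 + integral {0..u} F') has_vector_derivative F' t) (at t within ({0..\<tau>} - S))"
      using has_vector_derivative_add[OF has_vector_derivative_const d1] by simp
    have d3: "(a has_vector_derivative F' t) (at t within ({0..\<tau>} - S))"
      by (rule has_vector_derivative_transform_within[OF d2 zero_less_one t']) (simp add: aint)
    have d4: "(a has_vector_derivative F' t) (at t within ({0<..<\<tau>} - S))"
      by (rule has_vector_derivative_within_subset[OF d3]) auto
    have "open ({0<..<\<tau>} - S)" using S(1) by (simp add: open_Diff finite_imp_closed)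
    then have "at t within ({0<..<\<tau>} - S) = at t" by (rule at_within_open[OF t])
    then show ?thesis using d4 eqF[of t] t by simp
  qed
  then show ?thesis using S(1) by blast
qed

lemma deriv_V: "\<exists>S. finite S \<and> (\<forall>t\<in>{0<..<\<tau>} - S. ((\<lambda>t. V (a t)) has_real_derivative DD t) (at t))"
  using deriv_a V_deriv[OF P_sym] by blast

lemma contV: "continuous_on {0..\<tau>} (\<lambda>t. V (a t))"
  by (intro continuous_intros acont linear_continuous_on_compose[OF acont]) simp

lemma dyn_cont: "continuous_on UNIV dyn"
  by (intro continuous_intros linear_continuous_on continuous_on_compose2[OF Ups_cont]) auto

lemma DD_le: "t \<in> {0..\<tau>} \<Longrightarrow> DD t \<le> dyn (a t) + cc * norm (a t) * norm (f t)"
  using spec_bound[of P "a t" "f t"] by (simp add: inner_add_right)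

lemma DD_Fb: "t \<in> {0..\<tau>} \<Longrightarrow> DD t \<le> dyn (a t) + cc * norm (a t) * Fb"
proof -
  assume t: "t \<in> {0..\<tau>}"
  have "cc * norm (a t) * norm (f t) \<le> cc * norm (a t) * Fb"
    using fb t cc_pos by (intro mult_left_mono) auto
  then show ?thesis using DD_le[OF t] by simp
qed

lemma Kb:
  assumes M: "lmin * \<delta>\<^sup>2 \<le> V x" and d: "dyn x \<le> - \<epsilon> * (norm x)\<^sup>2"
  shows "dyn x + cc * norm x * Fb \<le> 0"
proof -
  have r: "lmin / lmax \<le> 1" using lmax_ge lmax_pos by simp
  have "lmin * \<delta>\<^sup>2 \<le> lmax * (norm x)\<^sup>2" using M Vhi[of x] by simp
  then have h1: "lmin * \<delta>\<^sup>2 / lmax \<le> (norm x)\<^sup>2" using lmax_pos by (simp add: field_simps)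
  have "(lmin * \<delta> / lmax)\<^sup>2 = (lmin / lmax) * (lmin * \<delta>\<^sup>2 / lmax)"
    by (simp add: power2_eq_square)
  also have "\<dots> \<le> 1 * (lmin * \<delta>\<^sup>2 / lmax)"
    using r lmin_pos lmax_pos by (intro mult_right_mono) auto
  finally have "(lmin * \<delta> / lmax)\<^sup>2 \<le> (norm x)\<^sup>2" using h1 by simp
  then have nx: "lmin * \<delta> / lmax \<le> norm x"
    using lmin_pos lmax_pos \<delta>_pos by (simp add: power2_le_iff_abs_le)
  have "cc * norm x * Fb = norm x * (lmin * \<epsilon> * \<delta> / lmax)" using Fb_eq by (metis mult.commute mult.left_commute)
  also have "\<dots> \<le> norm x * (\<epsilon> * norm x)"
  proof -
    have "lmin * \<epsilon> * \<delta> / lmax = \<epsilon> * (lmin * \<delta> / lmax)" by simp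
    also have "\<dots> \<le> \<epsilon> * norm x" using nx \<epsilon>_pos by (intro mult_left_mono) auto
    finally show ?thesis by (intro mult_left_mono) auto
  qed
  finally show ?thesis using d by (simp add: power2_eq_square algebra_simps)
qed

lemma dyn_global:
  assumes eq: "lmin = lmax"
  shows "dyn x \<le> - \<epsilon> * (norm x)\<^sup>2"
proof -
  have q: "\<And>y. V y = lmin * (y \<bullet> y)"
    using lam_props(3,4)[OF P_sym] eq by (metis order_antisym)
  have Pq: "\<And>y. P *v y = lmin *\<^sub>R y" by (rule P_scalar[OF P_sym q])
  have dq: "dyn y = 2 * lmin * (y \<bullet> (L *v y))" for y
    using energy[of y] by (simp add: Pq inner_add_right)
  show ?thesis
  proof (cases "x = 0")
    case True then show ?thesis by (simp add: dq)
  next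
    case False
    define t where "t = \<delta> / norm x"
    have t0: "t > 0" using False \<delta>_pos by (simp add: t_def)
    have ny: "norm (t *\<^sub>R x) = \<delta>" using False \<delta>_pos by (simp add: t_def)
    then have "dyn (t *\<^sub>R x) \<le> - \<epsilon> * \<delta>\<^sup>2" using dyn_ball[of "t *\<^sub>R x"] by simp
    moreover have "dyn (t *\<^sub>R x) = t\<^sup>2 * dyn x"
    proof -
      have "dyn (t *\<^sub>R x) = 2 * lmin * ((t *\<^sub>R x) \<bullet> (L *v (t *\<^sub>R x)))" by (rule dq)
      also have "\<dots> = t\<^sup>2 * (2 * lmin * (x \<bullet> (L *v x)))"
        by (simp add: matrix_vector_mult_scaleR power2_eq_square)
      also have "\<dots> = t\<^sup>2 * dyn x" using dq[of x] by simp
      finally show ?thesis .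
    qed
    moreover have "\<delta>\<^sup>2 = t\<^sup>2 * (norm x)\<^sup>2" using False by (simp add: t_def power2_eq_square)
    ultimately have "t\<^sup>2 * dyn x \<le> t\<^sup>2 * (- \<epsilon> * (norm x)\<^sup>2)" by (simp add: algebra_simps)
    moreover have "t\<^sup>2 > 0" using t0 by simp
    ultimately show ?thesis using mult_le_cancel_left_pos by blast
  qed
qed

lemma a0_sq: "lmax * (norm a0)\<^sup>2 \<le> lmin * \<delta>\<^sup>2"
proof -
  have "(norm a0)\<^sup>2 \<le> (\<delta> * sqrt (lmin / lmax))\<^sup>2" using a0 by (intro power_mono) auto
  also have "\<dots> = \<delta>\<^sup>2 * (lmin / lmax)" using lmin_pos lmax_pos by (simp add: power_mult_distrib)
  finally have "lmax * (norm a0)\<^sup>2 \<le> lmax * (\<delta>\<^sup>2 * (lmin / lmax))" using lmax_pos by (intro mult_left_mono) auto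
  also have "\<dots> = lmin * \<delta>\<^sup>2" using lmax_pos by simp
  finally show ?thesis .
qed

lemma invariance: "\<forall>t\<in>{0..\<tau>}. V (a t) \<le> lmin * \<delta>\<^sup>2"
proof -
  obtain S where S: "finite S" "\<forall>t\<in>{0<..<\<tau>} - S. ((\<lambda>t. V (a t)) has_real_derivative DD t) (at t)"
    using deriv_V by blast
  show ?thesis
  proof (rule barrier[OF contV S(1)])
    show "((\<lambda>t. V (a t)) has_real_derivative DD u) (at u)" if "u \<in> {0<..<\<tau>} - S" for u
      using S(2) that by blast
    show "V (a 0) \<le> lmin * \<delta>\<^sup>2" using Vhi[of a0] a0_sq aini by simp
  next
    fix s assume s: "s \<in> {0..<\<tau>}" and below: "\<forall>u\<in>{0..s}. V (a u) \<le> lmin * \<delta>\<^sup>2"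
    have "V (a s) \<le> lmin * \<delta>\<^sup>2" using below s by auto
    then have "lmin * (norm (a s))\<^sup>2 \<le> lmin * \<delta>\<^sup>2" using Vlo[of "a s"] by linarith
    then have "(norm (a s))\<^sup>2 \<le> \<delta>\<^sup>2" using lmin_pos by simp
    then have ns: "norm (a s) \<le> \<delta>" using \<delta>_pos by (simp add: power2_le_iff_abs_le)
    show "\<exists>h>0. \<forall>u\<in>{s..s+h}. u \<le> \<tau> \<longrightarrow> lmin * \<delta>\<^sup>2 \<le> V (a u) \<longrightarrow> DD u \<le> 0"
    proof (cases "lmin = lmax")
      case True
      have "DD u \<le> 0" if "u \<in> {s..s+1}" "u \<le> \<tau>" "lmin * \<delta>\<^sup>2 \<le> V (a u)" for u
      proof -
        have u: "u \<in> {0..\<tau>}" using that s by auto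
        have "dyn (a u) + cc * norm (a u) * Fb \<le> 0" by (rule Kb[OF that(3) dyn_global[OF True]])
        then show ?thesis using DD_Fb[OF u] by simp
      qed
      then show ?thesis by (intro exI[of _ 1]) auto
    next
      case False
      then have lt: "lmin < lmax" using lmax_ge by simp
      define N where "N = ball 0 \<delta> \<union> {x. dyn x + cc * norm x * Fb < 0}"
      have oN: "open N" unfolding N_def
        by (intro open_Un open_ball open_Collect_less continuous_intros dyn_cont Ups_cont)
      have aN: "a s \<in> N"
      proof (cases "norm (a s) < \<delta>")
        case True then show ?thesis by (simp add: N_def)
      next
        case False
        then have nd: "norm (a s) = \<delta>" using ns by simp
        have "dyn (a s) \<le> - \<epsilon> * \<delta>\<^sup>2" using dyn_ball[OF ns] nd by simp
        moreover have "cc * norm (a s) * Fb = \<delta> * (lmin * \<epsilon> * \<delta> / lmax)" using nd Fb_eq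
          by (metis mult.commute mult.left_commute)
        moreover have "\<delta> * (lmin * \<epsilon> * \<delta> / lmax) < \<epsilon> * \<delta>\<^sup>2"
        proof -
          have "lmin / lmax < 1" using lt lmax_pos by simp
          then have "\<epsilon> * \<delta>\<^sup>2 * (lmin / lmax) < \<epsilon> * \<delta>\<^sup>2 * 1"
            using \<epsilon>_pos \<delta>_pos by (intro mult_strict_left_mono) auto
          then show ?thesis by (simp add: power2_eq_square field_simps)
        qed
        ultimately show ?thesis by (simp add: N_def)
      qed
      have "continuous (at s within {0..\<tau>}) a"
        using acont s by (simp add: continuous_on_eq_continuous_within)
      then have "eventually (\<lambda>u. a u \<in> N) (at s within {0..\<tau>})"
        using oN aN by (simp add: continuous_within topological_tendstoD)
      then obtain d where d: "d > 0" "\<And>u. u \<in> {0..\<tau>} \<Longrightarrow> u \<noteq> s \<Longrightarrow> dist u s < d \<Longrightarrow> a u \<in> N"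
        unfolding eventually_at by blast
      have "DD u \<le> 0" if u1: "u \<in> {s..s+d/2}" and u2: "u \<le> \<tau>" and u3: "lmin * \<delta>\<^sup>2 \<le> V (a u)" for u
      proof -
        have u: "u \<in> {0..\<tau>}" using u1 u2 s by auto
        have "a u \<in> N"
        proof (cases "u = s")
          case True then show ?thesis using aN by simp
        next
          case False then show ?thesis using d u u1 by (auto simp: dist_real_def)
        qed
        then have "dyn (a u) + cc * norm (a u) * Fb \<le> 0"
        proof (cases "norm (a u) < \<delta>")
          case True
          then show ?thesis using Kb[OF u3 dyn_ball] by simp
        next
          case False
          then show ?thesis using \<open>a u \<in> N\<close> by (simp add: N_def)
        qed
        then show ?thesis using DD_Fb[OF u] by simp
      qed
      then show ?thesis using d by (intro exI[of _ "d/2"]) auto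
    qed
  qed
qed

lemma inv_norm: "t \<in> {0..\<tau>} \<Longrightarrow> norm (a t) \<le> \<delta>"
proof -
  assume t: "t \<in> {0..\<tau>}"
  have "lmin * (norm (a t))\<^sup>2 \<le> lmin * \<delta>\<^sup>2" using invariance t Vlo[of "a t"] by (meson order_trans)
  then have "(norm (a t))\<^sup>2 \<le> \<delta>\<^sup>2" using lmin_pos by simp
  then show ?thesis using \<delta>_pos by (simp add: power2_le_iff_abs_le)
qed

lemma sup_bound:
  assumes G: "\<And>t. t \<in> {0..\<tau>} \<Longrightarrow> norm (f t) \<le> G" and G0: "G \<ge> 0"
  shows "t \<in> {0..\<tau>} \<Longrightarrow> norm (a t) \<le> (lmax * cc / (lmin * \<epsilon>)) * G + norm a0 * sqrt (lmax / lmin)"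
proof -
  assume t: "t \<in> {0..\<tau>}"
  define A0 where "A0 = cc * G * lmax / (\<epsilon> * sqrt lmin)"
  define K where "K = A0 + sqrt (V a0)"
  have V0: "V a0 \<ge> 0" using Vlo[of a0] lmin_pos by (meson order_trans zero_le_mult_iff zero_le_power2 less_imp_le)
  have A00: "A0 \<ge> 0" using cc_pos G0 lmax_pos \<epsilon>_pos lmin_pos by (simp add: A0_def)
  have K0: "K \<ge> A0" "K \<ge> 0" using A00 V0 by (auto simp: K_def)
  obtain S where S: "finite S" "\<forall>t\<in>{0<..<\<tau>} - S. ((\<lambda>t. V (a t)) has_real_derivative DD t) (at t)"
    using deriv_V by blast
  have bar: "\<forall>t\<in>{0..\<tau>}. V (a t) \<le> K\<^sup>2"
  proof (rule barrier[OF contV S(1)])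
    show "((\<lambda>t. V (a t)) has_real_derivative DD u) (at u)" if "u \<in> {0<..<\<tau>} - S" for u
      using S(2) that by blast
    have "V a0 = (sqrt (V a0))\<^sup>2" using V0 by simp
    also have "\<dots> \<le> K\<^sup>2" using A00 V0 by (intro power_mono) (auto simp: K_def)
    finally show "V (a 0) \<le> K\<^sup>2" using aini by simp
  next
    fix s assume s: "s \<in> {0..<\<tau>}"
    have "DD u \<le> 0" if u1: "u \<in> {s..s+1}" and u2: "u \<le> \<tau>" and u3: "K\<^sup>2 \<le> V (a u)" for u
    proof -
      have u: "u \<in> {0..\<tau>}" using u1 u2 s by auto
      have d: "dyn (a u) \<le> - \<epsilon> * (norm (a u))\<^sup>2" by (rule dyn_ball[OF inv_norm[OF u]])
      have f: "cc * norm (a u) * norm (f u) \<le> cc * norm (a u) * G"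
        using G[OF u] cc_pos by (intro mult_left_mono) auto
      have "(cc * G / \<epsilon>)\<^sup>2 \<le> (norm (a u))\<^sup>2"
      proof -
        have "(cc * G / \<epsilon>)\<^sup>2 \<le> (cc * G / \<epsilon>)\<^sup>2 * (lmax / lmin)"
        proof -
          have "1 \<le> lmax / lmin" using lmax_ge lmin_pos by simp
          then have "(cc * G / \<epsilon>)\<^sup>2 * 1 \<le> (cc * G / \<epsilon>)\<^sup>2 * (lmax / lmin)" by (intro mult_left_mono) auto
          then show ?thesis by simp
        qed
        also have "\<dots> = A0\<^sup>2 / lmax"
        proof -
          have sl: "(sqrt lmin)\<^sup>2 = lmin" using lmin_pos by simp
          have "A0\<^sup>2 = (cc * G / \<epsilon>)\<^sup>2 * lmax\<^sup>2 / lmin"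
            unfolding A0_def by (simp add: power_divide power_mult_distrib sl)
          then show ?thesis using lmax_pos by (simp add: power2_eq_square)
        qed
        also have "\<dots> \<le> K\<^sup>2 / lmax" using K0 A00 lmax_pos by (intro divide_right_mono power_mono) auto
        also have "\<dots> \<le> V (a u) / lmax" using u3 lmax_pos by (intro divide_right_mono) auto
        also have "\<dots> \<le> (norm (a u))\<^sup>2" using Vhi[of "a u"] lmax_pos by (simp add: field_simps)
        finally show ?thesis .
      qed
      then have "cc * G / \<epsilon> \<le> norm (a u)" using cc_pos G0 \<epsilon>_pos by (simp add: power2_le_iff_abs_le)
      then have "cc * G \<le> \<epsilon> * norm (a u)" using \<epsilon>_pos by (simp add: field_simps)
      then have "norm (a u) * (cc * G) \<le> norm (a u) * (\<epsilon> * norm (a u))" by (intro mult_left_mono) auto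
      then have "cc * norm (a u) * G \<le> \<epsilon> * (norm (a u))\<^sup>2"
        by (simp add: power2_eq_square mult_ac)
      then show ?thesis using DD_le[OF u] d f by simp
    qed
    then show "\<exists>h>0. \<forall>u\<in>{s..s+h}. u \<le> \<tau> \<longrightarrow> K\<^sup>2 \<le> V (a u) \<longrightarrow> DD u \<le> 0"
      by (intro exI[of _ 1]) auto
  qed
  have "lmin * (norm (a t))\<^sup>2 \<le> K\<^sup>2" using bar t Vlo[of "a t"] by (meson order_trans)
  then have "(norm (a t))\<^sup>2 \<le> (K / sqrt lmin)\<^sup>2" using lmin_pos by (simp add: power_divide field_simps)
  then have "norm (a t) \<le> K / sqrt lmin" using K0 lmin_pos by (simp add: power2_le_iff_abs_le)
  also have "K / sqrt lmin = (lmax * cc / (lmin * \<epsilon>)) * G + sqrt (V a0) / sqrt lmin"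
  proof -
    have "A0 / sqrt lmin = cc * G * lmax / (\<epsilon> * (sqrt lmin * sqrt lmin))" by (simp add: A0_def)
    also have "\<dots> = (lmax * cc / (lmin * \<epsilon>)) * G" using lmin_pos by (simp add: mult_ac)
    finally show ?thesis by (simp add: K_def add_divide_distrib)
  qed
  also have "sqrt (V a0) / sqrt lmin \<le> norm a0 * sqrt (lmax / lmin)"
  proof -
    have "sqrt (V a0) \<le> sqrt (lmax * (norm a0)\<^sup>2)" using Vhi[of a0] by (rule real_sqrt_le_mono)
    also have "\<dots> = sqrt lmax * norm a0" by (simp add: real_sqrt_mult)
    finally show ?thesis using lmin_pos by (simp add: real_sqrt_divide field_simps)
  qed
  finally show ?thesis by simp
qed

lemma stepA:
  fixes p \<eta> :: real
  assumes p: "p \<ge> 1" and eta: "0 < \<eta>" "\<eta> \<le> 1"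
    and fint: "(\<lambda>t. norm (f t) powr p) integrable_on {0..\<tau>}"
  shows "lmin powr (p/2) * integral {0..\<tau>} (\<lambda>t. norm (a t) powr p)
    \<le> (cc * lmax * (integral {0..\<tau>} (\<lambda>t. norm (f t) powr p)) powr (1/p) / (\<epsilon> * sqrt lmin) + \<eta>
        + sqrt (V a0 + \<eta>) * (2 * lmax / (\<epsilon> * p)) powr (1/p)) powr p
       + p * sqrt \<eta> * (sqrt (lmax * \<delta>\<^sup>2 + 1)) powr (p-1) * \<tau>"
proof -
  define k where "k = \<epsilon> / (2 * lmax)"
  define c' where "c' = cc / (2 * sqrt lmin)"
  define Gp where "Gp = integral {0..\<tau>} (\<lambda>t. norm (f t) powr p)"
  define G where "G = Gp powr (1/p)"
  define \<alpha> where "\<alpha> = c' * G / k"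
  define \<rho>0 where "\<rho>0 = (2 * lmax / (\<epsilon> * p)) powr (1/p)"
  define B where "B = sqrt (V a0 + \<eta>) * \<rho>0"
  define xb where "xb = sqrt (lmax * \<delta>\<^sup>2 + 1)"
  define u where "u = (\<alpha> + \<eta>) / (\<alpha> + \<eta> + B)"
  define \<theta> where "\<theta> = (k / c') * u"
  define Ac where "Ac = p * k - c' * (p - 1) * \<theta>"
  define W where "W t = V (a t) + \<eta>" for t
  define Z where "Z t = W t powr (p/2)" for t
  define Z' where "Z' t = (p/2) * W t powr (p/2 - 1) * DD t" for t
  define E where "E = p * k * sqrt \<eta> * xb powr (p-1)"
  define X where "X = integral {0..\<tau>} (\<lambda>t. norm (a t) powr p)"
  define IZ where "IZ = integral {0..\<tau>} Z"
  have p0: "p > 0" using p by simp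
  have k0: "k > 0" using \<epsilon>_pos lmax_pos by (simp add: k_def)
  have c'0: "c' > 0" using cc_pos lmin_pos by (simp add: c'_def)
  have Gp0: "Gp \<ge> 0" unfolding Gp_def by (rule integral_nonneg[OF fint]) simp
  have G0: "G \<ge> 0" by (simp add: G_def)
  have GpG: "G powr p = Gp" using Gp0 p0 by (simp add: G_def powr_powr)
  have \<alpha>0: "\<alpha> \<ge> 0" using c'0 G0 k0 by (simp add: \<alpha>_def)
  have \<alpha>_eq: "\<alpha> = cc * lmax * G / (\<epsilon> * sqrt lmin)"
    using lmax_pos lmin_pos \<epsilon>_pos by (simp add: \<alpha>_def c'_def k_def field_simps)
  have \<rho>00: "\<rho>0 > 0" using lmax_pos \<epsilon>_pos p0 by (simp add: \<rho>0_def)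
  have Vnn: "V x \<ge> 0" for x using Vlo[of x] lmin_pos by (meson order_trans zero_le_mult_iff zero_le_power2 less_imp_le)
  have B0: "B \<ge> 0" using \<rho>00 Vnn[of a0] eta by (simp add: B_def)
  have u0: "u > 0" "u \<le> 1" using \<alpha>0 eta B0 by (auto simp: u_def)
  have th0: "\<theta> > 0" using k0 c'0 u0 by (simp add: \<theta>_def)
  have W0: "W t > 0" for t using Vnn[of "a t"] eta by (simp add: W_def)
  have Ac_eq: "Ac = k * (p - (p-1) * u)" using c'0 by (simp add: Ac_def \<theta>_def field_simps)
  have q1: "p - (p-1) * u \<ge> 1"
  proof -
    have "(p-1) * u \<le> (p-1) * 1" using u0 p by (intro mult_left_mono) auto
    then show ?thesis by simp
  qed
  obtain S where S: "finite S" "\<forall>t\<in>{0<..<\<tau>} - S. ((\<lambda>t. V (a t)) has_real_derivative DD t) (at t)"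
    using deriv_V by blast
  have dZ: "(Z has_real_derivative Z' t) (at t)" if t: "t \<in> {0<..<\<tau>} - S" for t
  proof -
    have "((\<lambda>t. V (a t) + \<eta>) has_real_derivative DD t + 0) (at t)"
      using S(2) t by (intro DERIV_add DERIV_const) auto
    then have dW: "(W has_real_derivative DD t) (at t)" by (simp add: W_def[abs_def])
    have "DERIV (\<lambda>t. W t powr (p/2)) t :> (p/2) * W t powr (p/2 - of_nat 1) * DD t"
      by (rule DERIV_fun_powr[OF dW W0])
    then show ?thesis by (simp add: Z_def[abs_def] Z'_def)
  qed
  have contW: "continuous_on {0..\<tau>} W" unfolding W_def[abs_def] by (rule continuous_on_add[OF contV continuous_on_const])
  have contZ: "continuous_on {0..\<tau>} Z" unfolding Z_def[abs_def]
    by (rule continuous_on_powr[OF contW continuous_on_const]) (use W0 in \<open>auto simp: less_imp_neq[symmetric]\<close>)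
  have ftc: "(Z' has_integral (Z \<tau> - Z 0)) {0..\<tau>}"
    by (rule fundamental_theorem_of_calculus_interior_strong[OF S(1) \<tau> _ contZ])
       (use dZ in \<open>auto simp: has_real_derivative_iff_has_vector_derivative\<close>)
  have pwb: "Z' t \<le> - Ac * Z t + c' * \<theta> powr (1-p) * norm (f t) powr p + E" if t: "t \<in> {0..\<tau>}" for t
  proof -
    define x where "x = sqrt (W t)"
    have x0: "x > 0" using W0[of t] by (simp add: x_def)
    have xv: "x\<^sup>2 = V (a t) + \<eta>" using W0[of t] by (simp add: x_def W_def)
    have na: "norm (a t) \<le> \<delta>" by (rule inv_norm[OF t])
    have Dv: "DD t \<le> - \<epsilon> * (norm (a t))\<^sup>2 + cc * norm (a t) * norm (f t)"
      using DD_le[OF t] dyn_ball[OF na] by simp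
    have xxb: "x \<le> xb"
    proof -
      have "V (a t) \<le> lmax * \<delta>\<^sup>2"
      proof -
        have "(norm (a t))\<^sup>2 \<le> \<delta>\<^sup>2" using na by (intro power_mono) auto
        then have "lmax * (norm (a t))\<^sup>2 \<le> lmax * \<delta>\<^sup>2" using lmax_pos by (intro mult_left_mono) auto
        then show ?thesis using Vhi[of "a t"] by linarith
      qed
      then have "W t \<le> lmax * \<delta>\<^sup>2 + 1" using eta by (simp add: W_def)
      then show ?thesis unfolding x_def xb_def by (rule real_sqrt_le_mono)
    qed
    have "(p/2) * x powr (p-2) * DD t \<le> - (p*k - c'*(p-1)*\<theta>) * x powr p
           + c' * \<theta> powr (1-p) * norm (f t) powr p + p * k * sqrt \<eta> * xb powr (p-1)"
      by (rule pw_bound[OF x0 eta(1) xv Vlo Vhi norm_ge_zero norm_ge_zero Dv xxb p th0 lmin_pos lmax_pos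
            \<epsilon>_pos less_imp_le[OF cc_pos] k_def c'_def])
    moreover have "x powr (p-2) = W t powr (p/2 - 1)"
      using W0[of t] by (simp add: x_def sqrt_powr diff_divide_distrib)
    moreover have "x powr p = Z t" using W0[of t] by (simp add: x_def sqrt_powr Z_def)
    ultimately show ?thesis by (simp add: Z'_def Ac_def E_def)
  qed
  have intZ: "(Z has_integral IZ) {0..\<tau>}"
    using integrable_continuous_interval[OF contZ] by (simp add: IZ_def has_integral_integral)
  have intF: "((\<lambda>t. norm (f t) powr p) has_integral Gp) {0..\<tau>}"
    using fint by (simp add: Gp_def has_integral_integral)
  have i1: "((\<lambda>t. - Ac * Z t) has_integral (- Ac * IZ)) {0..\<tau>}" by (rule has_integral_mult_right[OF intZ])
  have i2: "((\<lambda>t. c' * \<theta> powr (1-p) * norm (f t) powr p) has_integral (c' * \<theta> powr (1-p) * Gp)) {0..\<tau>}"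
    by (rule has_integral_mult_right[OF intF])
  have i3: "((\<lambda>t. E) has_integral (\<tau> * E)) {0..\<tau>}" using has_integral_const_real[of E 0 \<tau>] \<tau> by simp
  have intRH: "((\<lambda>t. - Ac * Z t + c' * \<theta> powr (1-p) * norm (f t) powr p + E) has_integral
      (- Ac * IZ + c' * \<theta> powr (1-p) * Gp + \<tau> * E)) {0..\<tau>}"
    by (intro has_integral_add i1 i2 i3)
  have le1: "Z \<tau> - Z 0 \<le> - Ac * IZ + c' * \<theta> powr (1-p) * Gp + \<tau> * E"
    by (rule has_integral_le[OF ftc intRH]) (use pwb in auto)
  have Z\<tau>: "Z \<tau> \<ge> 0" by (simp add: Z_def)
  have contN: "continuous_on {0..\<tau>} (\<lambda>t. norm (a t) powr p)"
    by (rule continuous_on_powr'[OF continuous_on_norm[OF acont] continuous_on_const]) (use p0 in auto)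
  have XIZ: "lmin powr (p/2) * X \<le> IZ"
  proof -
    have "lmin powr (p/2) * X = integral {0..\<tau>} (\<lambda>t. lmin powr (p/2) * norm (a t) powr p)"
      by (simp add: X_def)
    also have "\<dots> \<le> integral {0..\<tau>} Z"
    proof (rule integral_le)
      show "(\<lambda>t. lmin powr (p/2) * norm (a t) powr p) integrable_on {0..\<tau>}"
        by (intro integrable_continuous_interval continuous_on_mult[OF continuous_on_const contN])
      show "Z integrable_on {0..\<tau>}" by (rule integrable_continuous_interval[OF contZ])
      fix t assume t: "t \<in> {0..\<tau>}"
      have "norm (a t) powr p = ((norm (a t))\<^sup>2) powr (p/2)" by (rule norm_powr_sq) simp
      then have "lmin powr (p/2) * norm (a t) powr p = lmin powr (p/2) * ((norm (a t))\<^sup>2) powr (p/2)"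
        by simp
      also have "\<dots> = (lmin * (norm (a t))\<^sup>2) powr (p/2)" using lmin_pos by (simp add: powr_mult)
      also have "\<dots> \<le> W t powr (p/2)"
        using Vlo[of "a t"] eta lmin_pos p0 by (intro powr_mono2) (auto simp: W_def)
      finally show "lmin powr (p/2) * norm (a t) powr p \<le> Z t" by (simp add: Z_def)
    qed
    finally show ?thesis by (simp add: IZ_def)
  qed
  have rho_p: "\<rho>0 powr p = 2 * lmax / (\<epsilon> * p)" using lmax_pos \<epsilon>_pos p0 by (simp add: \<rho>0_def powr_powr)
  have Z0: "Z 0 = k * p * B powr p"
  proof -
    have "B powr p = sqrt (V a0 + \<eta>) powr p * \<rho>0 powr p"
      using \<rho>00 Vnn[of a0] eta by (simp add: B_def powr_mult)
    also have "sqrt (V a0 + \<eta>) powr p = (V a0 + \<eta>) powr (p/2)" using Vnn[of a0] eta by (simp add: sqrt_powr)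
    finally have "k * p * B powr p = (k * p * (2*lmax/(\<epsilon>*p))) * (V a0 + \<eta>) powr (p/2)"
      using rho_p by (simp add: mult_ac)
    also have "k * p * (2*lmax/(\<epsilon>*p)) = 1" using lmax_pos \<epsilon>_pos p0 by (simp add: k_def field_simps)
    finally show ?thesis by (simp add: Z_def W_def aini)
  qed
  have Fterm: "c' * \<theta> powr (1-p) * Gp = k * \<alpha> powr p * u powr (1-p)"
  proof -
    have e1: "\<theta> powr (1-p) = (k/c') powr (1-p) * u powr (1-p)"
    proof -
      have "\<theta> = (k/c') * u" by (simp add: \<theta>_def)
      then show ?thesis using k0 c'0 u0 by (simp only: powr_mult less_imp_le divide_nonneg_pos)
    qed
    have "\<alpha> = (c'/k) * G" by (simp add: \<alpha>_def)
    then have "\<alpha> powr p = (c'/k) powr p * G powr p"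
      using c'0 k0 G0 by (metis powr_mult less_imp_le divide_nonneg_pos)
    then have e2: "\<alpha> powr p = (c'/k) powr p * Gp" using GpG by simp
    have cpw: "c' powr p * c' powr (1-p) = c'" using c'0 by (simp add: powr_add[symmetric])
    have kpw: "k powr p * k powr (1-p) = k" using k0 by (simp add: powr_add[symmetric])
    have e3: "c' * (k/c') powr (1-p) = k * (c'/k) powr p"
    proof -
      have "c' * (k/c') powr (1-p) = c' * k powr (1-p) / c' powr (1-p)"
        using k0 c'0 by (simp add: powr_divide)
      also have "\<dots> = c' powr p * k powr (1-p)"
        using cpw c'0 by (simp add: field_simps)
      also have "\<dots> = k * (c' powr p / k powr p)"
        using kpw k0 by (simp add: field_simps)
      also have "\<dots> = k * (c'/k) powr p" using k0 c'0 by (simp add: powr_divide)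
      finally show ?thesis .
    qed
    have "c' * \<theta> powr (1-p) * Gp = (c' * (k/c') powr (1-p)) * u powr (1-p) * Gp" by (simp add: e1 mult_ac)
    also have "\<dots> = k * ((c'/k) powr p * Gp) * u powr (1-p)" by (simp add: e3 mult_ac)
    also have "\<dots> = k * \<alpha> powr p * u powr (1-p)" by (simp add: e2)
    finally show ?thesis .
  qed
  have "Ac * IZ \<le> Z 0 + c' * \<theta> powr (1-p) * Gp + \<tau> * E" using le1 Z\<tau> by linarith
  then have main1: "k * (p - (p-1)*u) * IZ \<le> k * (p * B powr p + \<alpha> powr p * u powr (1-p)) + \<tau> * E"
    unfolding Ac_eq Z0 Fterm by (simp add: algebra_simps)
  have main2: "\<alpha> powr p * u powr (1-p) \<le> (\<alpha>+\<eta>) powr p * u powr (1-p)"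
    using \<alpha>0 eta p0 by (intro mult_right_mono powr_mono2) auto
  have fa: "p * B powr p + (\<alpha>+\<eta>) powr p * u powr (1-p) \<le> (p - (p-1)*u) * (\<alpha>+\<eta>+B) powr p"
    using final_alg[of "\<alpha>+\<eta>" B p] \<alpha>0 eta B0 p by (simp add: u_def add.assoc)
  define q where "q = p - (p-1)*u"
  have q0: "q \<ge> 1" using q1 by (simp add: q_def)
  have "k * q * IZ \<le> k * (q * (\<alpha>+\<eta>+B) powr p) + \<tau> * E"
  proof -
    have "k * (p * B powr p + \<alpha> powr p * u powr (1-p)) \<le> k * (q * (\<alpha>+\<eta>+B) powr p)"
      using main2 fa k0 by (intro mult_left_mono) (auto simp: q_def)
    then show ?thesis using main1 by (simp add: q_def)
  qed
  then have "IZ \<le> (\<alpha>+\<eta>+B) powr p + \<tau> * E / (k * q)"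
    using k0 q0 by (simp add: field_simps)
  also have "\<tau> * E / (k * q) \<le> \<tau> * E / k"
  proof -
    have E0: "E \<ge> 0" using p0 k0 eta by (simp add: E_def)
    show ?thesis using k0 q0 E0 \<tau> by (intro divide_left_mono) (auto intro: mult_pos_pos)
  qed
  also have "\<tau> * E / k = p * sqrt \<eta> * xb powr (p-1) * \<tau>" using k0 by (simp add: E_def)
  finally have "lmin powr (p/2) * X \<le> (\<alpha>+\<eta>+B) powr p + p * sqrt \<eta> * xb powr (p-1) * \<tau>"
    using XIZ by simp
  then show ?thesis by (simp add: X_def \<alpha>_eq G_def Gp_def B_def \<rho>0_def xb_def)
qed

lemma Lp_core:
  fixes p :: real
  assumes p: "p \<ge> 1" and fint: "(\<lambda>t. norm (f t) powr p) integrable_on {0..\<tau>}"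
  shows "integral {0..\<tau>} (\<lambda>t. norm (a t) powr p) \<le>
    ((lmax * cc / (lmin * \<epsilon>)) * (integral {0..\<tau>} (\<lambda>t. norm (f t) powr p)) powr (1/p)
      + norm a0 * sqrt (lmax / lmin) * (2 * lmax / (\<epsilon> * p)) powr (1/p)) powr p"
proof -
  define X where "X = integral {0..\<tau>} (\<lambda>t. norm (a t) powr p)"
  define G where "G = (integral {0..\<tau>} (\<lambda>t. norm (f t) powr p)) powr (1/p)"
  define \<alpha> where "\<alpha> = cc * lmax * G / (\<epsilon> * sqrt lmin)"
  define \<rho>0 where "\<rho>0 = (2 * lmax / (\<epsilon> * p)) powr (1/p)"
  define xb where "xb = sqrt (lmax * \<delta>\<^sup>2 + 1)"
  define h where "h \<eta> = (\<alpha> + \<eta> + sqrt (V a0 + \<eta>) * \<rho>0) powr p + p * sqrt \<eta> * xb powr (p-1) * \<tau>" for \<eta>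
  have p0: "p > 0" using p by simp
  have Vnn: "V x \<ge> 0" for x using Vlo[of x] lmin_pos by (meson order_trans zero_le_mult_iff zero_le_power2 less_imp_le)
  have G0: "G \<ge> 0" by (simp add: G_def)
  have \<alpha>0: "\<alpha> \<ge> 0" using cc_pos lmax_pos G0 \<epsilon>_pos lmin_pos by (simp add: \<alpha>_def)
  have \<rho>00: "\<rho>0 > 0" using lmax_pos \<epsilon>_pos p0 by (simp add: \<rho>0_def)
  have ev: "eventually (\<lambda>\<eta>. lmin powr (p/2) * X \<le> h \<eta>) (at_right 0)"
    unfolding eventually_at_right_field
  proof (intro exI[of _ 1] conjI allI impI)
    fix \<eta> :: real assume "0 < \<eta>" "\<eta> < 1"
    then show "lmin powr (p/2) * X \<le> h \<eta>"
      using stepA[OF p _ _ fint, of \<eta>] by (simp add: X_def h_def \<alpha>_def G_def \<rho>0_def xb_def)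
  qed simp
  have t1: "((\<lambda>\<eta>. \<alpha> + \<eta> + sqrt (V a0 + \<eta>) * \<rho>0) \<longlongrightarrow> \<alpha> + 0 + sqrt (V a0 + 0) * \<rho>0) (at_right 0)"
    by (intro tendsto_intros)
  have t2: "((\<lambda>\<eta>. (\<alpha> + \<eta> + sqrt (V a0 + \<eta>) * \<rho>0) powr p) \<longlongrightarrow> (\<alpha> + 0 + sqrt (V a0 + 0) * \<rho>0) powr p) (at_right 0)"
  proof (rule tendsto_powr'[OF t1 tendsto_const])
    have "eventually (\<lambda>\<eta>. 0 < \<eta>) (at_right (0::real))" by (rule eventually_at_right_less)
    then have "eventually (\<lambda>\<eta>. 0 \<le> \<alpha> + \<eta> + sqrt (V a0 + \<eta>) * \<rho>0) (at_right 0)"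
      by (rule eventually_mono) (use \<alpha>0 \<rho>00 Vnn[of a0] in auto)
    then show "\<alpha> + 0 + sqrt (V a0 + 0) * \<rho>0 \<noteq> 0 \<or> 0 < p \<and> (\<forall>\<^sub>F x in at_right 0. 0 \<le> \<alpha> + x + sqrt (V a0 + x) * \<rho>0)"
      using p0 by blast
  qed
  have t3: "((\<lambda>\<eta>. p * sqrt \<eta> * xb powr (p-1) * \<tau>) \<longlongrightarrow> p * sqrt 0 * xb powr (p-1) * \<tau>) (at_right 0)"
    by (intro tendsto_intros)
  have "(h \<longlongrightarrow> (\<alpha> + sqrt (V a0) * \<rho>0) powr p) (at_right 0)"
    using tendsto_add[OF t2 t3] by (simp add: h_def[abs_def])
  then have C: "lmin powr (p/2) * X \<le> (\<alpha> + sqrt (V a0) * \<rho>0) powr p"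
    by (rule tendsto_lowerbound[OF _ ev]) simp
  define Y where "Y = (lmax * cc / (lmin * \<epsilon>)) * G + norm a0 * sqrt (lmax / lmin) * \<rho>0"
  have base: "(\<alpha> + sqrt (V a0) * \<rho>0) / sqrt lmin \<le> Y"
  proof -
    have e: "\<alpha> / sqrt lmin = (lmax * cc / (lmin * \<epsilon>)) * G"
    proof -
      have "\<alpha> / sqrt lmin = cc * lmax * G / (\<epsilon> * (sqrt lmin * sqrt lmin))" by (simp add: \<alpha>_def)
      also have "\<dots> = (lmax * cc / (lmin * \<epsilon>)) * G" using lmin_pos by (simp add: mult_ac)
      finally show ?thesis .
    qed
    have "sqrt (V a0) / sqrt lmin \<le> norm a0 * sqrt (lmax / lmin)"
    proof -
      have "sqrt (V a0) \<le> sqrt (lmax * (norm a0)\<^sup>2)" using Vhi[of a0] by (rule real_sqrt_le_mono)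
      also have "\<dots> = sqrt lmax * norm a0" by (simp add: real_sqrt_mult)
      finally show ?thesis using lmin_pos by (simp add: real_sqrt_divide field_simps)
    qed
    then have "sqrt (V a0) / sqrt lmin * \<rho>0 \<le> norm a0 * sqrt (lmax / lmin) * \<rho>0"
      using \<rho>00 by (intro mult_right_mono) auto
    then have "sqrt (V a0) * \<rho>0 / sqrt lmin \<le> norm a0 * sqrt (lmax / lmin) * \<rho>0"
      by (simp add: mult.commute times_divide_eq_right)
    then show ?thesis unfolding Y_def using e by (simp add: add_divide_distrib)
  qed
  have sl: "(sqrt lmin) powr p = lmin powr (p/2)" using lmin_pos by (simp add: sqrt_powr)
  have "X \<le> (\<alpha> + sqrt (V a0) * \<rho>0) powr p / lmin powr (p/2)"
    using C lmin_pos by (simp add: field_simps)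
  also have "\<dots> = ((\<alpha> + sqrt (V a0) * \<rho>0) / sqrt lmin) powr p"
    using \<alpha>0 \<rho>00 Vnn[of a0] lmin_pos by (simp add: powr_divide sl)
  also have "\<dots> \<le> Y powr p"
    using base \<alpha>0 \<rho>00 Vnn[of a0] lmin_pos p0 by (intro powr_mono2) auto
  finally show ?thesis by (simp add: X_def Y_def G_def \<rho>0_def)
qed

end

lemma indicator_trunc_eq:
  fixes g :: "real \<Rightarrow> 'a::real_normed_vector" and p :: real
  assumes p: "p > 0"
  shows "(\<lambda>t. indicator {0..} t *\<^sub>R (norm (trunc \<tau> g t) powr p)) =
         (\<lambda>t. indicator {0..\<tau>} t *\<^sub>R (norm (g t) powr p))"
  by (rule ext) (auto simp: indicator_def trunc_def)

lemma trunc_Lp_finite: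
  fixes g :: "real \<Rightarrow> 'a::real_normed_vector" and p :: real
  assumes p: "p > 0" and si: "set_integrable lborel {0..} (\<lambda>t. norm (trunc \<tau> g t) powr p)"
  shows "(\<lambda>t. norm (g t) powr p) integrable_on {0..\<tau>}"
    "(LINT t:{0..}|lborel. norm (trunc \<tau> g t) powr p) = integral {0..\<tau>} (\<lambda>t. norm (g t) powr p)"
proof -
  have si2: "set_integrable lborel {0..\<tau>} (\<lambda>t. norm (g t) powr p)"
    using si unfolding set_integrable_def indicator_trunc_eq[OF p] .
  show "(\<lambda>t. norm (g t) powr p) integrable_on {0..\<tau>}" by (rule set_borel_integral_eq_integral(1)[OF si2])
  have "(LINT t:{0..}|lborel. norm (trunc \<tau> g t) powr p) = (LINT t:{0..\<tau>}|lborel. norm (g t) powr p)"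
    unfolding set_lebesgue_integral_def indicator_trunc_eq[OF p] ..
  also have "\<dots> = integral {0..\<tau>} (\<lambda>t. norm (g t) powr p)" by (rule set_borel_integral_eq_integral(2)[OF si2])
  finally show "(LINT t:{0..}|lborel. norm (trunc \<tau> g t) powr p) = integral {0..\<tau>} (\<lambda>t. norm (g t) powr p)" .
qed

theorem theorem3:
  fixes L P Q :: "real^'n^'n"
    and R :: "'n \<Rightarrow> real^'n^'n"
    and D :: "(real^'n) set"
    and \<delta> \<epsilon> :: real
  assumes hurwitz: "hurwitz L"
    and R_sym: "\<And>m. symmetric_mat (R m)"
    and energy: "\<And>a. a \<bullet> Upsilon R a = 0"
    and \<delta>_pos: "\<delta> > 0"
    and D_ball: "cball 0 \<delta> \<subseteq> D"
    and P_sym: "symmetric_mat P"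
    and \<epsilon>_pos: "\<epsilon> > 0"
    and Q_psd: "psd Q"
    and V_pos: "\<And>a. a \<in> D \<Longrightarrow> a \<bullet> (P *v a) - \<epsilon> * (a \<bullet> a) \<ge> 0"
    and V_dec: "\<And>a. a \<in> D \<Longrightarrow>
        - ((2 *\<^sub>R (P *v a)) \<bullet> (L *v a + Upsilon R a)
           + (\<delta>\<^sup>2 - a \<bullet> a) * (a \<bullet> (Q *v a)) + \<epsilon> * (a \<bullet> a)) \<ge> 0"
  shows "\<forall>a0 :: real^'n. norm a0 \<le> \<delta> * sqrt (lambda_min P / lambda_max P) \<longrightarrow>
    (\<forall>p::ereal. 1 \<le> p \<longrightarrow>
    (\<forall>\<tau>::real. \<forall>f :: real \<Rightarrow> real^'n. \<forall>a :: real \<Rightarrow> real^'n.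
       \<tau> \<ge> 0 \<longrightarrow> in_Lpe p f \<longrightarrow>
       (\<forall>t\<in>{0..\<tau>}. norm (f t) \<le> lambda_min P * \<epsilon> * \<delta> / (lambda_max P * spec_norm (2 *\<^sub>R P))) \<longrightarrow>
       continuous_on {0..\<tau>} a \<longrightarrow> a 0 = a0 \<longrightarrow>
       (\<forall>t\<in>{0..\<tau>}. ((\<lambda>s. L *v a s + Upsilon R (a s) + f s) has_integral (a t - a0)) {0..t}) \<longrightarrow>
       (\<forall>t\<in>{0..\<tau>}. norm (a t) \<le> \<delta>) \<and>
       Lp_norm p (trunc \<tau> a) \<le>
         (lambda_max P * spec_norm (2 *\<^sub>R P) / (lambda_min P * \<epsilon>)) * Lp_norm p (trunc \<tau> f)
         + norm a0 * sqrt (lambda_max P / lambda_min P) * rho p (lambda_max P) \<epsilon>))"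
proof (intro allI impI)
  fix a0 :: "real^'n" and p :: ereal and \<tau> :: real and f a :: "real \<Rightarrow> real^'n"
  assume a0: "norm a0 \<le> \<delta> * sqrt (lambda_min P / lambda_max P)" and p1: "1 \<le> p"
    and \<tau>: "\<tau> \<ge> 0" and Lpe: "in_Lpe p f"
    and fb: "\<forall>t\<in>{0..\<tau>}. norm (f t) \<le> lambda_min P * \<epsilon> * \<delta> / (lambda_max P * spec_norm (2 *\<^sub>R P))"
    and acont: "continuous_on {0..\<tau>} a" and aini: "a 0 = a0"
    and integ: "\<forall>t\<in>{0..\<tau>}. ((\<lambda>s. L *v a s + Upsilon R (a s) + f s) has_integral (a t - a0)) {0..t}"
  have inLp: "in_Lp p (trunc \<tau> f)" using Lpe \<tau> by (simp add: in_Lpe_def)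
  have pc: "piecewise_cont (trunc \<tau> f)" using inLp by (simp add: in_Lp_def)
  interpret T: traj L P Q R D \<delta> \<epsilon> a0 \<tau> f a
    by unfold_locales (use energy \<delta>_pos D_ball P_sym \<epsilon>_pos Q_psd V_pos V_dec a0 \<tau> pc fb acont aini integ in auto)
  show "(\<forall>t\<in>{0..\<tau>}. norm (a t) \<le> \<delta>) \<and>
       Lp_norm p (trunc \<tau> a) \<le>
         (lambda_max P * spec_norm (2 *\<^sub>R P) / (lambda_min P * \<epsilon>)) * Lp_norm p (trunc \<tau> f)
         + norm a0 * sqrt (lambda_max P / lambda_min P) * rho p (lambda_max P) \<epsilon>"
  proof
    show "\<forall>t\<in>{0..\<tau>}. norm (a t) \<le> \<delta>" using T.inv_norm by blast
  next
    have \<gamma>0: "lambda_max P * spec_norm (2 *\<^sub>R P) / (lambda_min P * \<epsilon>) \<ge> 0"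
      using T.lmax_pos T.cc_pos T.lmin_pos \<epsilon>_pos by simp
    show "Lp_norm p (trunc \<tau> a) \<le>
         (lambda_max P * spec_norm (2 *\<^sub>R P) / (lambda_min P * \<epsilon>)) * Lp_norm p (trunc \<tau> f)
         + norm a0 * sqrt (lambda_max P / lambda_min P) * rho p (lambda_max P) \<epsilon>"
    proof (cases "p = \<infinity>")
      case True
      define G where "G = Sup ((\<lambda>t. norm (trunc \<tau> f t)) ` {0..})"
      have bdd: "bdd_above ((\<lambda>t. norm (trunc \<tau> f t)) ` {0..})" using inLp True by (simp add: in_Lp_def)
      have fG: "norm (f t) \<le> G" if "t \<in> {0..\<tau>}" for t
      proof -
        have "norm (trunc \<tau> f t) \<le> G" unfolding G_def by (rule cSup_upper[OF _ bdd]) (use that in auto)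
        then show ?thesis using that by (simp add: trunc_def)
      qed
      have G0: "G \<ge> 0" using fG[of 0] \<tau> by (meson atLeastAtMost_iff norm_ge_zero order_trans order_refl)
      define RHS where "RHS = (lambda_max P * spec_norm (2 *\<^sub>R P) / (lambda_min P * \<epsilon>)) * G
          + norm a0 * sqrt (lambda_max P / lambda_min P)"
      have RHS0: "RHS \<ge> 0" unfolding RHS_def using \<gamma>0 G0 T.lmax_pos T.lmin_pos
        by (intro add_nonneg_nonneg mult_nonneg_nonneg) auto
      have "Sup ((\<lambda>t. norm (trunc \<tau> a t)) ` {0..}) \<le> RHS"
      proof (rule cSup_least)
        show "(\<lambda>t. norm (trunc \<tau> a t)) ` {0..} \<noteq> {}" by auto
        fix y assume "y \<in> (\<lambda>t. norm (trunc \<tau> a t)) ` {0..}"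
        then obtain t where t: "t \<ge> 0" "y = norm (trunc \<tau> a t)" by auto
        show "y \<le> RHS"
        proof (cases "t \<le> \<tau>")
          case True
          then have "norm (a t) \<le> RHS" unfolding RHS_def using T.sup_bound[OF fG G0] t by auto
          then show ?thesis using t True by (simp add: trunc_def)
        next
          case False then show ?thesis using t RHS0 by (simp add: trunc_def)
        qed
      qed
      then show ?thesis using True by (simp add: Lp_norm_def rho_def G_def RHS_def)
    next
      case False
      obtain p' where pp: "p = ereal p'" using False p1 by (cases p) auto
      have p'1: "p' \<ge> 1" using p1 pp by simp
      have p'0: "p' > 0" using p'1 by simp
      have rp: "real_of_ereal p = p'" using pp by simp
      have sif: "set_integrable lborel {0..} (\<lambda>t. norm (trunc \<tau> f t) powr p')"
        using inLp False rp by (simp add: in_Lp_def)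
      note fr = trunc_Lp_finite[OF p'0 sif]
      have contN: "continuous_on {0..\<tau>} (\<lambda>t. norm (a t) powr p')"
        by (rule continuous_on_powr'[OF continuous_on_norm[OF acont] continuous_on_const]) (use p'0 in auto)
      have sia0: "set_integrable lborel {0..\<tau>} (\<lambda>t. norm (a t) powr p')"
        by (rule borel_integrable_atLeastAtMost'[OF contN])
      have sia: "set_integrable lborel {0..} (\<lambda>t. norm (trunc \<tau> a t) powr p')"
        using sia0 unfolding set_integrable_def indicator_trunc_eq[OF p'0] .
      note ar = trunc_Lp_finite[OF p'0 sia]
      define X where "X = integral {0..\<tau>} (\<lambda>t. norm (a t) powr p')"
      define Gp where "Gp = integral {0..\<tau>} (\<lambda>t. norm (f t) powr p')"
      define Y where "Y = (lambda_max P * spec_norm (2 *\<^sub>R P) / (lambda_min P * \<epsilon>)) * Gp powr (1/p')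
          + norm a0 * sqrt (lambda_max P / lambda_min P) * (2 * lambda_max P / (\<epsilon> * p')) powr (1/p')"
      have core: "X \<le> Y powr p'" unfolding X_def Y_def Gp_def by (rule T.Lp_core[OF p'1 fr(1)])
      have X0: "X \<ge> 0" unfolding X_def by (rule integral_nonneg[OF ar(1)]) simp
      have Y0: "Y \<ge> 0" unfolding Y_def using \<gamma>0 T.lmax_pos T.lmin_pos
        by (intro add_nonneg_nonneg mult_nonneg_nonneg) auto
      have "X powr (1/p') \<le> (Y powr p') powr (1/p')" using core X0 p'0 by (intro powr_mono2) auto
      also have "\<dots> = Y" using Y0 p'0 by (simp add: powr_powr)
      finally have "X powr (1/p') \<le> Y" .
      then show ?thesis using False
        by (simp add: Lp_norm_def rho_def rp ar(2) fr(2) X_def Gp_def Y_def)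
    qed
  qed
qed

end
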